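(* Let $p,r$ be coprime positive integers and $q=0$. Then $\mathcal O(L_0(p,r))$, with the $\mathbb C[u,u^{-1}]$-coaction given by its $\mathbb Z$-grading, is a quantum principal $U(1)$-fibration (principal $\mathbb C[u,u^{-1}]$-comodule algebra) over its coinvariant subalgebra $\mathcal O(\mathbb{WP}_0(1,r))$.
   Context: $\mathcal O(SU_0(2))$ is the unital complex $*$-algebra generated by $\alpha,\beta$ with relations $\beta\alpha=0$, $\beta^*\alpha=0$, $\beta\beta^*=\beta^*\beta$, $\alpha^*\alpha=1$, $\alpha\alpha^*+\beta\beta^*=1$. Give it the $\mathbb Z$-grading (weight) $w(\alpha)=1$, $w(\alpha^* )=-1$, $w(\beta)=r$, $w(\beta^* )=-r$. $\mathcal O(L_0(p,r))$ is the subalgebra of elements whose homogeneous components have weight in $p\mathbb Z$, graded by $\deg=w/p$, with coaction $\rho(x)=x\otimes u^{n}$ for $x$ of degree $n$; $\mathcal O(\mathbb{WP}_0(1,r))$ is its degree-zero subalgebra $B$. $A$ is a quantum principal fibration over $B$ if the canonical map $A\otimes_BA\to A\otimes\mathbb C[u,u^{-1}]$, $x\otimes y\mapsto xy\otimes u^n$ ($y$ of degree $n$), is bijective and the multiplication map $B\otimes A\to A$ admits a splitting that is a left $B$-module and right $\mathbb C[u,u^{-1}]$-comodule map. *)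

theory Defs
  imports Complex_Main "HOL-Library.Poly_Mapping"
begin

datatype gen = Al | Alst | Be | Best

type_synonym falg = "gen list \<Rightarrow>\<^sub>0 complex"

fun gstar :: "gen \<Rightarrow> gen" where
  "gstar Al = Alst" | "gstar Alst = Al" | "gstar Be = Best" | "gstar Best = Be"

definition fmul :: "falg \<Rightarrow> falg \<Rightarrow> falg" where
  "fmul x y = (\<Sum>u\<in>Poly_Mapping.keys x. \<Sum>v\<in>Poly_Mapping.keys y. Poly_Mapping.single (u @ v) (Poly_Mapping.lookup x u * Poly_Mapping.lookup y v))"

definition fsmul :: "complex \<Rightarrow> falg \<Rightarrow> falg" where
  "fsmul c x = Poly_Mapping.map (\<lambda>z. c * z) x"

definition fone :: falg where
  "fone = Poly_Mapping.single [] 1"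

definition fstar :: "falg \<Rightarrow> falg" where
  "fstar x = (\<Sum>w\<in>Poly_Mapping.keys x. Poly_Mapping.single (rev (List.map gstar w)) (cnj (Poly_Mapping.lookup x w)))"

definition fgen :: "gen \<Rightarrow> falg" where
  "fgen a = Poly_Mapping.single [a] 1"

definition su0_relators :: "falg set" where
  "su0_relators =
     { fmul (fgen Be) (fgen Al),
       fmul (fgen Best) (fgen Al),
       fmul (fgen Be) (fgen Best) - fmul (fgen Best) (fgen Be),
       fmul (fgen Alst) (fgen Al) - fone,
       fmul (fgen Al) (fgen Alst) + fmul (fgen Be) (fgen Best) - fone }"

text \<open>We work with representatives in the free algebra:
  two representatives are equal in O(SU_0(2)) iff their difference lies in su0_ideal.\<close>
inductive_set su0_ideal :: "falg set" where
  rel:  "x \<in> su0_relators \<Longrightarrow> x \<in> su0_ideal"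
| zero: "0 \<in> su0_ideal"
| add:  "x \<in> su0_ideal \<Longrightarrow> y \<in> su0_ideal \<Longrightarrow> x + y \<in> su0_ideal"
| smul: "x \<in> su0_ideal \<Longrightarrow> fsmul c x \<in> su0_ideal"
| lmul: "x \<in> su0_ideal \<Longrightarrow> fmul y x \<in> su0_ideal"
| rmul: "x \<in> su0_ideal \<Longrightarrow> fmul x y \<in> su0_ideal"
| star: "x \<in> su0_ideal \<Longrightarrow> fstar x \<in> su0_ideal"

fun gwt :: "nat \<Rightarrow> gen \<Rightarrow> int" where
  "gwt r Al = 1" | "gwt r Alst = -1" | "gwt r Be = int r" | "gwt r Best = - int r"

definition wt :: "nat \<Rightarrow> gen list \<Rightarrow> int" where
  "wt r w = sum_list (List.map (gwt r) w)"

text \<open>Homogeneous component of weight m (the relators are homogeneous, so this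
  descends to O(SU_0(2))).\<close>
definition hcomp :: "nat \<Rightarrow> int \<Rightarrow> falg \<Rightarrow> falg" where
  "hcomp r m x = (\<Sum>w\<in>{w \<in> Poly_Mapping.keys x. wt r w = m}. Poly_Mapping.single w (Poly_Mapping.lookup x w))"

text \<open>Representatives of elements of O(L_0(p,r)) of degree n (weight p*n).\<close>
definition Ldeg :: "nat \<Rightarrow> nat \<Rightarrow> int \<Rightarrow> falg set" where
  "Ldeg p r n = {x. \<forall>m. m \<noteq> int p * n \<longrightarrow> hcomp r m x \<in> su0_ideal}"

text \<open>Representatives of elements of O(L_0(p,r)): all homogeneous components
  have weight in pZ.\<close>
definition Lset :: "nat \<Rightarrow> nat \<Rightarrow> falg set" where
  "Lset p r = {x. \<forall>m. \<not> int p dvd m \<longrightarrow> hcomp r m x \<in> su0_ideal}"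

text \<open>Representatives of elements of O(WP_0(1,r)) = degree-zero part.\<close>
definition WPset :: "nat \<Rightarrow> nat \<Rightarrow> falg set" where
  "WPset p r = Ldeg p r 0"

type_synonym ftens = "(falg \<times> falg) \<Rightarrow>\<^sub>0 complex"

definition tsingle :: "falg \<Rightarrow> falg \<Rightarrow> ftens" where
  "tsingle x y = Poly_Mapping.single (x, y) 1"

definition tsmul :: "complex \<Rightarrow> ftens \<Rightarrow> ftens" where
  "tsmul c t = Poly_Mapping.map (\<lambda>z. c * z) t"

definition Tform :: "falg set \<Rightarrow> falg set \<Rightarrow> ftens set" where
  "Tform X Y = {t. Poly_Mapping.keys t \<subseteq> X \<times> Y}"

text \<open>The subspace of relations defining X (tensor over R) Y, where X, Y are sets of
  representatives (modulo su0_ideal) of a right R-module and a left R-module, and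
  R a set of representatives of the ring. For a tensor product over the complex
  numbers take R = {} (scalars are handled by the bilinearity relations).\<close>
inductive_set tens_rel :: "falg set \<Rightarrow> falg set \<Rightarrow> falg set \<Rightarrow> ftens set"
  for R X Y where
  zero: "0 \<in> tens_rel R X Y"
| add: "s \<in> tens_rel R X Y \<Longrightarrow> t \<in> tens_rel R X Y \<Longrightarrow> s + t \<in> tens_rel R X Y"
| smul: "s \<in> tens_rel R X Y \<Longrightarrow> tsmul c s \<in> tens_rel R X Y"
| addl: "x \<in> X \<Longrightarrow> x' \<in> X \<Longrightarrow> y \<in> Y \<Longrightarrow>
           tsingle (x + x') y - tsingle x y - tsingle x' y \<in> tens_rel R X Y"
| addr: "x \<in> X \<Longrightarrow> y \<in> Y \<Longrightarrow> y' \<in> Y \<Longrightarrow>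
           tsingle x (y + y') - tsingle x y - tsingle x y' \<in> tens_rel R X Y"
| scl: "x \<in> X \<Longrightarrow> y \<in> Y \<Longrightarrow> tsingle (fsmul c x) y - tsmul c (tsingle x y) \<in> tens_rel R X Y"
| scr: "x \<in> X \<Longrightarrow> y \<in> Y \<Longrightarrow> tsingle x (fsmul c y) - tsmul c (tsingle x y) \<in> tens_rel R X Y"
| eql: "x \<in> X \<Longrightarrow> x' \<in> X \<Longrightarrow> y \<in> Y \<Longrightarrow> x - x' \<in> su0_ideal \<Longrightarrow>
           tsingle x y - tsingle x' y \<in> tens_rel R X Y"
| eqr: "x \<in> X \<Longrightarrow> y \<in> Y \<Longrightarrow> y' \<in> Y \<Longrightarrow> y - y' \<in> su0_ideal \<Longrightarrow>
           tsingle x y - tsingle x y' \<in> tens_rel R X Y"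
| bal: "x \<in> X \<Longrightarrow> b \<in> R \<Longrightarrow> y \<in> Y \<Longrightarrow>
           tsingle (fmul x b) y - tsingle x (fmul b y) \<in> tens_rel R X Y"

definition tmult :: "ftens \<Rightarrow> falg" where
  "tmult t = (\<Sum>(x, y)\<in>Poly_Mapping.keys t. fsmul (Poly_Mapping.lookup t (x, y)) (fmul x y))"

definition tlmul :: "falg \<Rightarrow> ftens \<Rightarrow> ftens" where
  "tlmul b t = (\<Sum>(x, y)\<in>Poly_Mapping.keys t. Poly_Mapping.single (fmul b x, y) (Poly_Mapping.lookup t (x, y)))"

text \<open>Canonical map A \<otimes>_B A \<rightarrow> A \<otimes> C[u,u^-1], x \<otimes> y \<mapsto> x y_n \<otimes> u^n summed over
  the degree-n components y_n of y. An element of A \<otimes> C[u,u^-1] is identified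
  with the finitely supported family of its coefficients of u^n (n \<in> Z).\<close>
definition can_map :: "nat \<Rightarrow> nat \<Rightarrow> ftens \<Rightarrow> int \<Rightarrow> falg" where
  "can_map p r t n = (\<Sum>(x, y)\<in>Poly_Mapping.keys t. fsmul (Poly_Mapping.lookup t (x, y)) (fmul x (hcomp r (int p * n) y)))"

definition can_bijective :: "nat \<Rightarrow> nat \<Rightarrow> bool" where
  "can_bijective p r \<longleftrightarrow>
     (\<forall>t \<in> Tform (Lset p r) (Lset p r).
        (\<forall>n. can_map p r t n \<in> su0_ideal) \<longrightarrow> t \<in> tens_rel (WPset p r) (Lset p r) (Lset p r))
   \<and> (\<forall>g :: int \<Rightarrow> falg. (\<forall>n. g n \<in> Lset p r) \<and> finite {n. g n \<notin> su0_ideal} \<longrightarrow>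
        (\<exists>t \<in> Tform (Lset p r) (Lset p r). \<forall>n. can_map p r t n - g n \<in> su0_ideal))"

text \<open>A splitting s : A \<rightarrow> B \<otimes> A (tensor over C) of the multiplication map
  B \<otimes> A \<rightarrow> A which is a well-defined linear map, a left B-module map and a right
  C[u,u^-1]-comodule map (i.e. maps the degree-n part of A into B \<otimes> A_n).\<close>
definition has_equivariant_splitting :: "nat \<Rightarrow> nat \<Rightarrow> bool" where
  "has_equivariant_splitting p r \<longleftrightarrow>
     (\<exists>s :: falg \<Rightarrow> ftens.
        let A = Lset p r; B = WPset p r; N = tens_rel {} B A in
        (\<forall>a \<in> A. s a \<in> Tform B A)
      \<and> (\<forall>a \<in> A. \<forall>a' \<in> A. a - a' \<in> su0_ideal \<longrightarrow> s a - s a' \<in> N)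
      \<and> (\<forall>a \<in> A. \<forall>a' \<in> A. s (a + a') - s a - s a' \<in> N)
      \<and> (\<forall>a \<in> A. \<forall>c. s (fsmul c a) - tsmul c (s a) \<in> N)
      \<and> (\<forall>b \<in> B. \<forall>a \<in> A. s (fmul b a) - tlmul b (s a) \<in> N)
      \<and> (\<forall>n. \<forall>a \<in> Ldeg p r n. \<exists>t \<in> Tform B (Ldeg p r n). s a - t \<in> N)
      \<and> (\<forall>a \<in> A. tmult (s a) - a \<in> su0_ideal))"

definition quantum_principal_fibration :: "nat \<Rightarrow> nat \<Rightarrow> bool" where
  "quantum_principal_fibration p r \<longleftrightarrow> can_bijective p r \<and> has_equivariant_splitting p r"

end

theory Submission
  imports Defs
begin

instantiation list :: (type) monoid_add
begin
definition zero_list_def: "(0::'a list) = []"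
definition plus_list_def: "(xs::'a list) + ys = xs @ ys"
instance by standard (auto simp: zero_list_def plus_list_def)
end

lemma pm_decomp: "(x :: 'a \<Rightarrow>\<^sub>0 'b::comm_monoid_add) = (\<Sum>k\<in>Poly_Mapping.keys x. Poly_Mapping.single k (Poly_Mapping.lookup x k))"
proof (rule poly_mapping_eqI)
  fix w
  show "Poly_Mapping.lookup x w = Poly_Mapping.lookup (\<Sum>k\<in>Poly_Mapping.keys x. Poly_Mapping.single k (Poly_Mapping.lookup x k)) w"
    by (cases "w \<in> Poly_Mapping.keys x")
       (auto simp: lookup_sum lookup_single when_def in_keys_iff)
qed

lemma fmul_eq: "fmul x y = x * y"
proof -
  have "x * y = (\<Sum>u\<in>Poly_Mapping.keys x. Poly_Mapping.single u (Poly_Mapping.lookup x u)) * (\<Sum>v\<in>Poly_Mapping.keys y. Poly_Mapping.single v (Poly_Mapping.lookup y v))"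
    using pm_decomp[of x] pm_decomp[of y] by simp
  also have "\<dots> = fmul x y"
    by (simp add: fmul_def sum_product mult_single plus_list_def)
  finally show ?thesis ..
qed

lemma fsmul_eq: "fsmul c x = Poly_Mapping.single [] c * x"
  using mult_map_scale_conv_mult[of c x] by (simp add: fsmul_def zero_list_def)

lemma fone_eq: "fone = 1"
  by (metis single_one zero_list_def fone_def)

definition KS :: "('k \<Rightarrow> 'c::zero \<Rightarrow> 'r::comm_monoid_add) \<Rightarrow> ('k \<Rightarrow>\<^sub>0 'c) \<Rightarrow> 'r" where
  "KS F x = (\<Sum>k\<in>Poly_Mapping.keys x. F k (Poly_Mapping.lookup x k))"

definition KSok :: "('k \<Rightarrow> 'c::comm_monoid_add \<Rightarrow> 'r::comm_monoid_add) \<Rightarrow> bool" where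
  "KSok F \<longleftrightarrow> (\<forall>k. F k 0 = 0) \<and> (\<forall>k a b. F k (a + b) = F k a + F k b)"

lemma KS_superset:
  assumes "KSok F" "finite S" "Poly_Mapping.keys x \<subseteq> S"
  shows "KS F x = (\<Sum>k\<in>S. F k (Poly_Mapping.lookup x k))"
  unfolding KS_def
  by (rule sum.mono_neutral_left) (use assms in \<open>auto simp: KSok_def in_keys_iff\<close>)

lemma KS_add:
  assumes "KSok F"
  shows "KS F (x + y) = KS F x + KS F y"
proof -
  let ?S = "Poly_Mapping.keys x \<union> Poly_Mapping.keys y"
  have "KS F (x + y) = (\<Sum>k\<in>?S. F k (Poly_Mapping.lookup (x+y) k))"
    using assms keys_add[of x y] by (intro KS_superset) auto
  also have "\<dots> = (\<Sum>k\<in>?S. F k (Poly_Mapping.lookup x k)) + (\<Sum>k\<in>?S. F k (Poly_Mapping.lookup y k))"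
    using assms by (simp add: KSok_def lookup_add sum.distrib)
  also have "\<dots> = KS F x + KS F y"
    using KS_superset[OF assms, of ?S x] KS_superset[OF assms, of ?S y] by simp
  finally show ?thesis .
qed

lemma KS_zero: "KS F 0 = 0"
  by (simp add: KS_def)

lemma KS_single:
  assumes "KSok F"
  shows "KS F (Poly_Mapping.single k c) = F k c"
  using assms by (cases "c = 0") (auto simp: KS_def KSok_def)

lemma KS_sum:
  assumes "KSok F"
  shows "KS F (\<Sum>i\<in>I. f i) = (\<Sum>i\<in>I. KS F (f i))"
  by (induction I rule: infinite_finite_induct) (auto simp: KS_zero KS_add assms)

lemma KS_diff:
  fixes F :: "'k \<Rightarrow> 'c::ab_group_add \<Rightarrow> 'r::ab_group_add"
  assumes "KSok F"
  shows "KS F (x - y) = KS F x - KS F y"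
proof -
  have "KS F (x - y) + KS F y = KS F x"
    using KS_add[OF assms, of "x - y" y] by simp
  thus ?thesis by (simp add: algebra_simps)
qed

lemma KS_sum_list:
  assumes "KSok F"
  shows "KS F (sum_list (map f xs)) = sum_list (map (\<lambda>i. KS F (f i)) xs)"
  by (induction xs) (auto simp: KS_zero KS_add assms)


section \<open>Homogeneous components\<close>

definition hF :: "nat \<Rightarrow> int \<Rightarrow> gen list \<Rightarrow> complex \<Rightarrow> falg" where
  "hF r m w c = (if wt r w = m then Poly_Mapping.single w c else 0)"

lemma KSok_hF: "KSok (hF r m)"
  by (auto simp: KSok_def hF_def single_add)

lemma hcomp_KS: "hcomp r m x = KS (hF r m) x"
  unfolding hcomp_def KS_def hF_def
  by (simp add: sum.inter_filter[symmetric])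

lemma hcomp_add: "hcomp r m (x + y) = hcomp r m x + hcomp r m y"
  by (simp add: hcomp_KS KS_add KSok_hF)

lemma hcomp_diff: "hcomp r m (x - y) = hcomp r m x - hcomp r m y"
  by (simp add: hcomp_KS KS_diff KSok_hF)

lemma hcomp_zero[simp]: "hcomp r m 0 = 0"
  by (simp add: hcomp_KS KS_zero)

lemma hcomp_sum: "hcomp r m (\<Sum>i\<in>I. f i) = (\<Sum>i\<in>I. hcomp r m (f i))"
  by (simp add: hcomp_KS KS_sum KSok_hF)

lemma hcomp_single: "hcomp r m (Poly_Mapping.single w c) = (if wt r w = m then Poly_Mapping.single w c else 0)"
  by (simp add: hcomp_KS KS_single KSok_hF hF_def)

lemma wt_append[simp]: "wt r (u @ v) = wt r u + wt r v"
  by (simp add: wt_def)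

lemma wt_Nil[simp]: "wt r [] = 0"
  by (simp add: wt_def)

lemma wt_Cons[simp]: "wt r (a # v) = gwt r a + wt r v"
  by (simp add: wt_def)

lemma hcomp_smul: "hcomp r m (Poly_Mapping.single [] c * x) = Poly_Mapping.single [] c * hcomp r m x"
proof -
  have e: "Poly_Mapping.single [] c * x = Poly_Mapping.map ((*) c) x"
    using fsmul_eq[of c x] by (simp add: fsmul_def)
  have k: "Poly_Mapping.keys (Poly_Mapping.single [] c * x) \<subseteq> Poly_Mapping.keys x"
    unfolding e by (auto simp: in_keys_iff Poly_Mapping.map.rep_eq when_def)
  have "hcomp r m (Poly_Mapping.single [] c * x) = (\<Sum>w\<in>Poly_Mapping.keys x. hF r m w (Poly_Mapping.lookup (Poly_Mapping.single [] c * x) w))"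
    unfolding hcomp_KS using k by (intro KS_superset KSok_hF) auto
  also have "\<dots> = (\<Sum>w\<in>Poly_Mapping.keys x. Poly_Mapping.single [] c * hF r m w (Poly_Mapping.lookup x w))"
    unfolding e by (intro sum.cong) (auto simp: hF_def Poly_Mapping.map.rep_eq when_def mult_single plus_list_def)
  also have "\<dots> = Poly_Mapping.single [] c * hcomp r m x"
    by (simp add: hcomp_KS KS_def sum_distrib_left)
  finally show ?thesis .
qed

lemma hcomp_fsmul: "hcomp r m (fsmul c x) = fsmul c (hcomp r m x)"
  by (simp add: fsmul_eq hcomp_smul)

definition homog :: "nat \<Rightarrow> int \<Rightarrow> falg \<Rightarrow> bool" where
  "homog r i x \<longleftrightarrow> (\<forall>w\<in>Poly_Mapping.keys x. wt r w = i)"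

lemma homog_hcomp: "homog r m (hcomp r m x)"
proof -
  have "Poly_Mapping.keys (hcomp r m x) \<subseteq> (\<Union>w\<in>{w \<in> Poly_Mapping.keys x. wt r w = m}. Poly_Mapping.keys (Poly_Mapping.single w (Poly_Mapping.lookup x w)))"
    unfolding hcomp_def by (rule keys_sum)
  thus ?thesis by (auto simp: homog_def split: if_splits)
qed

lemma hcomp_homog: "homog r i x \<Longrightarrow> hcomp r m x = (if m = i then x else 0)"
proof -
  assume h: "homog r i x"
  show ?thesis
  proof (cases "m = i")
    case True
    hence e: "{w \<in> Poly_Mapping.keys x. wt r w = m} = Poly_Mapping.keys x" using h by (auto simp: homog_def)
    show ?thesis unfolding hcomp_def e using True pm_decomp[of x] by simp
  next
    case False
    hence e: "{w \<in> Poly_Mapping.keys x. wt r w = m} = {}" using h by (auto simp: homog_def)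
    show ?thesis unfolding hcomp_def e using False by simp
  qed
qed

lemma hcomp_decomp:
  assumes "finite K" "wt r ` Poly_Mapping.keys x \<subseteq> K"
  shows "x = (\<Sum>m\<in>K. hcomp r m x)"
proof -
  have "(\<Sum>m\<in>K. hcomp r m x) = (\<Sum>m\<in>K. \<Sum>w\<in>Poly_Mapping.keys x. hF r m w (Poly_Mapping.lookup x w))"
    by (simp add: hcomp_KS KS_def)
  also have "\<dots> = (\<Sum>w\<in>Poly_Mapping.keys x. \<Sum>m\<in>K. hF r m w (Poly_Mapping.lookup x w))"
    by (rule sum.swap)
  also have "\<dots> = (\<Sum>w\<in>Poly_Mapping.keys x. Poly_Mapping.single w (Poly_Mapping.lookup x w))"
  proof (intro sum.cong refl)
    fix w assume "w \<in> Poly_Mapping.keys x"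
    hence "wt r w \<in> K" using assms by auto
    thus "(\<Sum>m\<in>K. hF r m w (Poly_Mapping.lookup x w)) = Poly_Mapping.single w (Poly_Mapping.lookup x w)"
      using assms(1) by (simp add: hF_def sum.delta')
  qed
  also have "\<dots> = x" by (rule pm_decomp[symmetric])
  finally show ?thesis ..
qed

lemma homog_mult: "homog r i a \<Longrightarrow> homog r j b \<Longrightarrow> homog r (i + j) (a * b)"
  using keys_mult[of a b] by (auto simp: homog_def plus_list_def)

lemma homog_zero[simp]: "homog r i 0"
  by (simp add: homog_def)

lemma homog_single: "homog r (wt r w) (Poly_Mapping.single w c)"
  by (simp add: homog_def)

lemma hcomp_mult:
  assumes "finite K" "wt r ` Poly_Mapping.keys a \<subseteq> K" "finite J" "wt r ` Poly_Mapping.keys b \<subseteq> J"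
  shows "hcomp r m (a * b) = (\<Sum>k\<in>K. \<Sum>j\<in>J. if k + j = m then hcomp r k a * hcomp r j b else 0)"
proof -
  have "a * b = (\<Sum>k\<in>K. hcomp r k a) * (\<Sum>j\<in>J. hcomp r j b)"
    using hcomp_decomp[OF assms(1,2)] hcomp_decomp[OF assms(3,4)] by simp
  also have "\<dots> = (\<Sum>k\<in>K. \<Sum>j\<in>J. hcomp r k a * hcomp r j b)"
    by (simp add: sum_product)
  finally have "hcomp r m (a * b) = (\<Sum>k\<in>K. \<Sum>j\<in>J. hcomp r m (hcomp r k a * hcomp r j b))"
    by (simp add: hcomp_sum)
  also have "\<dots> = (\<Sum>k\<in>K. \<Sum>j\<in>J. if k + j = m then hcomp r k a * hcomp r j b else 0)"
    by (intro sum.cong refl) (simp add: hcomp_homog[OF homog_mult[OF homog_hcomp homog_hcomp]])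
  finally show ?thesis .
qed


section \<open>The ideal\<close>

lemma I_mulL: "x \<in> su0_ideal \<Longrightarrow> y * x \<in> su0_ideal"
  using su0_ideal.lmul[of x y] by (simp add: fmul_eq)

lemma I_mulR: "x \<in> su0_ideal \<Longrightarrow> x * y \<in> su0_ideal"
  using su0_ideal.rmul[of x y] by (simp add: fmul_eq)

lemma I_add: "x \<in> su0_ideal \<Longrightarrow> y \<in> su0_ideal \<Longrightarrow> x + y \<in> su0_ideal"
  by (rule su0_ideal.add)

lemma I_zero[simp]: "0 \<in> su0_ideal"
  by (rule su0_ideal.zero)

lemma I_neg: "x \<in> su0_ideal \<Longrightarrow> - x \<in> su0_ideal"
proof -
  assume "x \<in> su0_ideal"
  hence "Poly_Mapping.single [] (-1) * x \<in> su0_ideal" by (rule I_mulL)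
  moreover have "Poly_Mapping.single [] (-1::complex) * x = - x"
    using single_uminus[of "[]::gen list" "1::complex"] by (simp add: zero_list_def[symmetric])
  ultimately show ?thesis by simp
qed

lemma I_diff: "x \<in> su0_ideal \<Longrightarrow> y \<in> su0_ideal \<Longrightarrow> x - y \<in> su0_ideal"
  unfolding diff_conv_add_uminus by (intro I_add I_neg)

lemma I_sum: "(\<And>i. i \<in> A \<Longrightarrow> f i \<in> su0_ideal) \<Longrightarrow> (\<Sum>i\<in>A. f i) \<in> su0_ideal"
  by (induction A rule: infinite_finite_induct) (auto intro: I_add)

lemma I_sum_list: "(\<And>i. i \<in> set xs \<Longrightarrow> f i \<in> su0_ideal) \<Longrightarrow> sum_list (map f xs) \<in> su0_ideal"
  by (induction xs) (auto intro: I_add)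

lemma I_fsmul: "x \<in> su0_ideal \<Longrightarrow> fsmul c x \<in> su0_ideal"
  by (rule su0_ideal.smul)

definition sF :: "gen list \<Rightarrow> complex \<Rightarrow> falg" where
  "sF w c = Poly_Mapping.single (rev (List.map gstar w)) (cnj c)"

lemma KSok_sF: "KSok sF"
  by (auto simp: KSok_def sF_def single_add)

lemma fstar_KS: "fstar x = KS sF x"
  by (simp add: fstar_def KS_def sF_def)

lemma fstar_sum: "fstar (\<Sum>i\<in>A. f i) = (\<Sum>i\<in>A. fstar (f i))"
  by (simp add: fstar_KS KS_sum KSok_sF)

lemma fstar_zero[simp]: "fstar 0 = 0"
  by (simp add: fstar_KS KS_zero)

lemma fstar_single: "fstar (Poly_Mapping.single w c) = Poly_Mapping.single (rev (List.map gstar w)) (cnj c)"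
  by (simp add: fstar_KS KS_single KSok_sF sF_def)

lemma gwt_gstar[simp]: "gwt r (gstar a) = - gwt r a"
  by (cases a) auto

lemma wt_star[simp]: "wt r (rev (List.map gstar w)) = - wt r w"
  by (induction w) (auto simp: wt_def)

lemma hcomp_fstar: "hcomp r m (fstar x) = fstar (hcomp r (-m) x)"
proof -
  have "hcomp r m (fstar x) = (\<Sum>w\<in>Poly_Mapping.keys x. hcomp r m (sF w (Poly_Mapping.lookup x w)))"
    by (simp add: fstar_KS KS_def hcomp_sum)
  also have "\<dots> = (\<Sum>w\<in>Poly_Mapping.keys x. fstar (hF r (-m) w (Poly_Mapping.lookup x w)))"
    by (intro sum.cong refl) (auto simp: sF_def hF_def hcomp_single fstar_single)
  also have "\<dots> = fstar (hcomp r (-m) x)"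
    by (simp add: hcomp_KS KS_def fstar_sum)
  finally show ?thesis .
qed

definition W :: "gen list \<Rightarrow> falg" where "W w = Poly_Mapping.single w 1"

lemma W_mult: "W u * W v = W (u @ v)"
  by (simp add: W_def mult_single plus_list_def)

lemma W_Nil: "W [] = 1"
  by (metis single_one zero_list_def W_def)

lemma fgen_W: "fgen a = W [a]"
  by (simp add: fgen_def W_def)

lemma homog_W: "homog r (wt r w) (W w)"
  by (simp add: W_def homog_single)

lemma hcomp_W: "hcomp r m (W w) = (if wt r w = m then W w else 0)"
  by (simp add: W_def hcomp_single)

lemma homog_add: "homog r i x \<Longrightarrow> homog r i y \<Longrightarrow> homog r i (x + y)"
  using keys_add[of x y] by (auto simp: homog_def)

lemma homog_neg: "homog r i x \<Longrightarrow> homog r i (- x)"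
  by (simp add: homog_def)

lemma homog_diff: "homog r i x \<Longrightarrow> homog r i y \<Longrightarrow> homog r i (x - y)"
  unfolding diff_conv_add_uminus by (intro homog_add homog_neg)

lemma homog_sum: "(\<And>k. k \<in> A \<Longrightarrow> homog r i (f k)) \<Longrightarrow> homog r i (\<Sum>k\<in>A. f k)"
  by (induction A rule: infinite_finite_induct) (auto intro: homog_add)

lemma homog_sum_list: "(\<And>k. k \<in> set xs \<Longrightarrow> homog r i (f k)) \<Longrightarrow> homog r i (sum_list (map f xs))"
  by (induction xs) (auto intro: homog_add)

lemma homog_W': "wt r w = i \<Longrightarrow> homog r i (W w)"
  using homog_W[of r w] by simp

lemma relators_homog: "x \<in> su0_relators \<Longrightarrow> \<exists>i. homog r i x"
proof -
  assume x: "x \<in> su0_relators"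
  have a: "homog r (1 + int r) (W [Be, Al])" by (rule homog_W') simp
  have b: "homog r (1 - int r) (W [Best, Al])" by (rule homog_W') simp
  have c: "homog r 0 (W [Be, Best] - W [Best, Be])" by (intro homog_diff homog_W') simp_all
  have d: "homog r 0 (W [Alst, Al] - W [])" by (intro homog_diff homog_W') simp_all
  have e: "homog r 0 (W [Al, Alst] + W [Be, Best] - W [])" by (intro homog_diff homog_add homog_W') simp_all
  from x a b c d e show ?thesis
    unfolding su0_relators_def fgen_W fmul_eq W_mult fone_eq W_Nil[symmetric] by auto
qed


lemma hcomp_ideal: "x \<in> su0_ideal \<Longrightarrow> hcomp r m x \<in> su0_ideal"
proof (induction x arbitrary: m rule: su0_ideal.induct)
  case (rel x)
  then obtain i where "homog r i x" using relators_homog by blast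
  then show ?case using rel su0_ideal.rel by (simp add: hcomp_homog)
next
  case zero then show ?case by simp
next
  case (add x y) then show ?case by (simp add: hcomp_add I_add)
next
  case (smul x c) then show ?case by (simp add: hcomp_fsmul I_fsmul)
next
  case (lmul x y)
  have "hcomp r m (y * x) = (\<Sum>k\<in>wt r ` Poly_Mapping.keys y. \<Sum>j\<in>wt r ` Poly_Mapping.keys x. if k + j = m then hcomp r k y * hcomp r j x else 0)"
    by (rule hcomp_mult) auto
  also have "\<dots> \<in> su0_ideal" using lmul.IH by (auto intro!: I_sum I_mulL)
  finally show ?case by (simp add: fmul_eq)
next
  case (rmul x y)
  have "hcomp r m (x * y) = (\<Sum>k\<in>wt r ` Poly_Mapping.keys x. \<Sum>j\<in>wt r ` Poly_Mapping.keys y. if k + j = m then hcomp r k x * hcomp r j y else 0)"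
    by (rule hcomp_mult) auto
  also have "\<dots> \<in> su0_ideal" using rmul.IH by (auto intro!: I_sum I_mulR)
  finally show ?case by (simp add: fmul_eq)
next
  case (star x)
  then show ?case by (simp add: hcomp_fstar su0_ideal.star)
qed

lemma hcomp_notin: "m \<notin> wt r ` Poly_Mapping.keys a \<Longrightarrow> hcomp r m a = 0"
proof -
  assume "m \<notin> wt r ` Poly_Mapping.keys a"
  hence e: "{w \<in> Poly_Mapping.keys a. wt r w = m} = {}" by auto
  show ?thesis unfolding hcomp_def e by simp
qed

lemma hcomp_homog_mult:
  assumes h: "homog r i h"
  shows "hcomp r m (h * a) = h * hcomp r (m - i) a"
proof -
  let ?J = "wt r ` Poly_Mapping.keys a"
  have "hcomp r m (h * a) = (\<Sum>k\<in>{i}. \<Sum>j\<in>?J. if k + j = m then hcomp r k h * hcomp r j a else 0)"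
    by (rule hcomp_mult) (use h in \<open>auto simp: homog_def\<close>)
  also have "\<dots> = (\<Sum>j\<in>?J. if i + j = m then hcomp r i h * hcomp r j a else 0)"
    by simp
  also have "\<dots> = (\<Sum>j\<in>?J. if i + j = m then h * hcomp r j a else 0)"
    unfolding hcomp_homog[OF h, of i] by simp
  also have "\<dots> = (\<Sum>j\<in>?J. if j = m - i then h * hcomp r j a else 0)"
    by (rule sum.cong) auto
  also have "\<dots> = h * hcomp r (m - i) a"
    using hcomp_notin[of "m - i" r a] by (auto simp: sum.delta')
  finally show ?thesis .
qed

lemma hcomp_hcomp: "hcomp r m (hcomp r k x) = (if m = k then hcomp r k x else 0)"
  by (simp add: hcomp_homog[OF homog_hcomp])

definition Gr :: "nat \<Rightarrow> int set \<Rightarrow> falg \<Rightarrow> bool" where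
  "Gr r S x \<longleftrightarrow> (\<forall>m. m \<notin> S \<longrightarrow> hcomp r m x \<in> su0_ideal)"

lemma Lset_Gr: "x \<in> Lset p r \<longleftrightarrow> Gr r {m. int p dvd m} x"
  by (simp add: Lset_def Gr_def)

lemma Ldeg_Gr: "x \<in> Ldeg p r n \<longleftrightarrow> Gr r {int p * n} x"
  by (simp add: Ldeg_def Gr_def)

lemma WPset_Gr: "x \<in> WPset p r \<longleftrightarrow> Gr r {0} x"
  by (simp add: WPset_def Ldeg_Gr)

lemma Gr_add: "Gr r S x \<Longrightarrow> Gr r S y \<Longrightarrow> Gr r S (x + y)"
  by (simp add: Gr_def hcomp_add I_add)

lemma Gr_diff: "Gr r S x \<Longrightarrow> Gr r S y \<Longrightarrow> Gr r S (x - y)"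
  by (simp add: Gr_def hcomp_diff I_diff)

lemma Gr_fsmul: "Gr r S x \<Longrightarrow> Gr r S (fsmul c x)"
  by (simp add: Gr_def hcomp_fsmul I_fsmul)

lemma Gr_ideal: "x \<in> su0_ideal \<Longrightarrow> Gr r S x"
  by (simp add: Gr_def hcomp_ideal)

lemma Gr_zero[simp]: "Gr r S 0"
  by (simp add: Gr_def)

lemma Gr_homog: "homog r i x \<Longrightarrow> i \<in> S \<Longrightarrow> Gr r S x"
  by (auto simp: Gr_def hcomp_homog)

lemma Gr_sum: "(\<And>k. k \<in> A \<Longrightarrow> Gr r S (f k)) \<Longrightarrow> Gr r S (\<Sum>k\<in>A. f k)"
  by (induction A rule: infinite_finite_induct) (auto intro: Gr_add)

lemma Gr_sum_list: "(\<And>k. k \<in> set xs \<Longrightarrow> Gr r S (f k)) \<Longrightarrow> Gr r S (sum_list (map f xs))"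
  by (induction xs) (auto intro: Gr_add)

lemma Gr_mult:
  assumes a: "Gr r S a" and b: "Gr r T b" and U: "\<And>k j. k \<in> S \<Longrightarrow> j \<in> T \<Longrightarrow> k + j \<in> U"
  shows "Gr r U (a * b)"
  unfolding Gr_def
proof (intro allI impI)
  fix m assume m: "m \<notin> U"
  have "hcomp r m (a * b) = (\<Sum>k\<in>wt r ` Poly_Mapping.keys a. \<Sum>j\<in>wt r ` Poly_Mapping.keys b. if k + j = m then hcomp r k a * hcomp r j b else 0)"
    by (rule hcomp_mult) auto
  also have "\<dots> \<in> su0_ideal"
  proof (intro I_sum)
    fix k j
    show "(if k + j = m then hcomp r k a * hcomp r j b else 0) \<in> su0_ideal"
    proof (cases "k + j = m")
      case True
      hence "k \<notin> S \<or> j \<notin> T" using U m by blast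
      thus ?thesis using a b True by (auto simp: Gr_def intro: I_mulL I_mulR)
    qed simp
  qed
  finally show "hcomp r m (a * b) \<in> su0_ideal" .
qed

lemma Gr_hcomp: "m \<in> S \<Longrightarrow> Gr r S (hcomp r m x)"
  by (rule Gr_homog[OF homog_hcomp])

lemma Gr0_decomp:
  assumes "Gr r {0} b"
  shows "b - hcomp r 0 b \<in> su0_ideal"
proof -
  let ?K = "insert 0 (wt r ` Poly_Mapping.keys b)"
  have "b = (\<Sum>k\<in>?K. hcomp r k b)" by (rule hcomp_decomp) auto
  also have "\<dots> = hcomp r 0 b + (\<Sum>k\<in>?K - {0}. hcomp r k b)"
    by (subst sum.remove[of _ 0]) auto
  finally have "b - hcomp r 0 b = (\<Sum>k\<in>?K - {0}. hcomp r k b)" by (simp add: algebra_simps)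
  also have "\<dots> \<in> su0_ideal" using assms by (auto simp: Gr_def intro!: I_sum)
  finally show ?thesis .
qed

lemma Gr0_hcomp_mult:
  assumes "Gr r {0} b"
  shows "hcomp r m (b * a) - b * hcomp r m a \<in> su0_ideal"
proof -
  let ?b0 = "hcomp r 0 b"
  have d: "b - ?b0 \<in> su0_ideal" by (rule Gr0_decomp[OF assms])
  have h0: "homog r 0 ?b0" by (rule homog_hcomp)
  have e: "hcomp r m (?b0 * a) = ?b0 * hcomp r m a"
    using hcomp_homog_mult[OF h0, of m a] by simp
  have "hcomp r m (b * a) - b * hcomp r m a = hcomp r m ((b - ?b0) * a) - (b - ?b0) * hcomp r m a"
    using e by (simp add: algebra_simps hcomp_add hcomp_diff)
  also have "\<dots> \<in> su0_ideal"
    using hcomp_ideal[OF I_mulR[OF d, of a], of r m] I_mulR[OF d, of "hcomp r m a"] by (rule I_diff)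
  finally show ?thesis .
qed


section \<open>Partition of unity\<close>

lemma I_trans: "x - y \<in> su0_ideal \<Longrightarrow> y - z \<in> su0_ideal \<Longrightarrow> x - z \<in> su0_ideal"
  using I_add[of "x - y" "y - z"] by simp

lemma I_sym: "x - y \<in> su0_ideal \<Longrightarrow> y - x \<in> su0_ideal"
  using I_neg[of "x - y"] by simp

lemma I_sandwich: "x - y \<in> su0_ideal \<Longrightarrow> a * x * b - a * y * b \<in> su0_ideal"
  using I_mulR[OF I_mulL[of "x - y" a], of b] by (simp add: algebra_simps)

lemma R1: "W [Be, Al] \<in> su0_ideal"
  using su0_ideal.rel[of "fmul (fgen Be) (fgen Al)"]
  by (simp add: su0_relators_def fgen_W fmul_eq W_mult)

lemma R4: "W [Alst, Al] - 1 \<in> su0_ideal"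
  using su0_ideal.rel[of "fmul (fgen Alst) (fgen Al) - fone"]
  by (simp add: su0_relators_def fgen_W fmul_eq W_mult fone_eq)

lemma R5: "W [Al, Alst] + W [Be, Best] - 1 \<in> su0_ideal"
  using su0_ideal.rel[of "fmul (fgen Al) (fgen Alst) + fmul (fgen Be) (fgen Best) - fone"]
  by (simp add: su0_relators_def fgen_W fmul_eq W_mult fone_eq)

lemma W_app: "W (u @ v) = W u * W v"
  by (simp add: W_mult)

lemma U1: "W (replicate k Alst @ replicate k Al) - 1 \<in> su0_ideal"
proof (induction k)
  case 0 then show ?case by (simp add: W_Nil)
next
  case (Suc k)
  have e: "replicate (Suc k) Alst @ replicate (Suc k) Al = replicate k Alst @ [Alst, Al] @ replicate k Al"
    by (simp add: replicate_append_same[symmetric])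
  have "W (replicate (Suc k) Alst @ replicate (Suc k) Al) - W (replicate k Alst) * 1 * W (replicate k Al) \<in> su0_ideal"
    unfolding e W_app mult.assoc[symmetric] using I_sandwich[OF R4] by simp
  then show ?case using Suc.IH by (simp add: W_app I_trans)
qed

lemma R_beta: "W [Be, Be, Best] - W [Be] \<in> su0_ideal"
proof -
  have "W [Be] * (W [Al, Alst] + W [Be, Best] - 1) \<in> su0_ideal" by (rule I_mulL[OF R5])
  moreover have "W [Be, Al, Alst] \<in> su0_ideal"
    using I_mulR[OF R1, of "W [Alst]"] by (simp add: W_mult)
  ultimately have "W [Be] * (W [Al, Alst] + W [Be, Best] - 1) - W [Be, Al, Alst] \<in> su0_ideal"
    by (rule I_diff)
  thus ?thesis by (simp add: algebra_simps W_mult)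
qed

lemma U2: "J \<ge> 1 \<Longrightarrow> W (replicate J Be @ replicate J Best) - W [Be, Best] \<in> su0_ideal"
proof (induction J rule: dec_induct)
  case base then show ?case by simp
next
  case (step J)
  have e: "replicate (Suc J) Be @ replicate (Suc J) Best = [Be] @ (replicate J Be @ replicate J Best) @ [Best]"
    by (simp add: replicate_append_same[symmetric])
  have 1: "W (replicate (Suc J) Be @ replicate (Suc J) Best) - W [Be] * W [Be, Best] * W [Best] \<in> su0_ideal"
    unfolding e W_app[of "[Be]"] W_app[of _ "[Best]"] using I_sandwich[OF step.IH, of "W [Be]" "W [Best]"] by (simp add: mult.assoc)
  have 2: "W [Be, Be, Best] * W [Best] - W [Be] * W [Best] \<in> su0_ideal"
    using I_sandwich[OF R_beta, of 1 "W [Best]"] by simp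
  show ?case using I_trans[OF 1] 2 by (simp add: W_mult)
qed

lemma U3: "1 - (W (replicate M Al @ replicate M Alst) + (\<Sum>k<M. W (replicate k Al @ [Be, Best] @ replicate k Alst))) \<in> su0_ideal"
proof (induction M)
  case 0 then show ?case by (simp add: W_Nil)
next
  case (Suc M)
  have e1: "W (replicate (Suc M) Al @ replicate (Suc M) Alst) = W (replicate M Al) * W [Al, Alst] * W (replicate M Alst)"
    by (simp add: W_mult replicate_append_same[symmetric])
  have e2: "W (replicate M Al @ [Be, Best] @ replicate M Alst) = W (replicate M Al) * W [Be, Best] * W (replicate M Alst)"
    by (simp add: W_mult)
  have e3: "W (replicate M Al @ replicate M Alst) = W (replicate M Al) * 1 * W (replicate M Alst)"
    by (simp add: W_mult)
  have "W (replicate M Al) * (W [Al, Alst] + W [Be, Best]) * W (replicate M Alst) - W (replicate M Al) * 1 * W (replicate M Alst) \<in> su0_ideal"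
    using I_sandwich[OF R5, of "W (replicate M Al)" "W (replicate M Alst)"] by simp
  hence "W (replicate (Suc M) Al @ replicate (Suc M) Alst) + W (replicate M Al @ [Be, Best] @ replicate M Alst) - W (replicate M Al @ replicate M Alst) \<in> su0_ideal"
    unfolding e1 e2 e3 by (simp add: algebra_simps)
  hence "1 - (W (replicate M Al @ replicate M Alst) + (\<Sum>k<M. W (replicate k Al @ [Be, Best] @ replicate k Alst))) - (1 - (W (replicate (Suc M) Al @ replicate (Suc M) Alst) + (\<Sum>k<Suc M. W (replicate k Al @ [Be, Best] @ replicate k Alst)))) \<in> su0_ideal"
    by (simp add: algebra_simps)
  from I_diff[OF Suc.IH this] show ?case by (simp add: algebra_simps)
qed


lemma U4:
  assumes "M \<ge> 1"
  shows "W ((replicate k Al @ replicate M Be @ replicate c Alst) @ (replicate c Al @ replicate M Best @ replicate k Alst))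
         - W (replicate k Al @ [Be, Best] @ replicate k Alst) \<in> su0_ideal"
proof -
  have 1: "W ((replicate k Al @ replicate M Be @ replicate c Alst) @ (replicate c Al @ replicate M Best @ replicate k Alst))
     - W (replicate k Al @ replicate M Be) * 1 * W (replicate M Best @ replicate k Alst) \<in> su0_ideal"
    using I_sandwich[OF U1, of "W (replicate k Al @ replicate M Be)" c "W (replicate M Best @ replicate k Alst)"]
    by (simp add: W_mult mult.assoc)
  have 2: "W (replicate k Al @ replicate M Be) * 1 * W (replicate M Best @ replicate k Alst)
     - W (replicate k Al @ [Be, Best] @ replicate k Alst) \<in> su0_ideal"
    using I_sandwich[OF U2[OF assms], of "W (replicate k Al)" "W (replicate k Alst)"]
    by (simp add: W_mult mult.assoc)
  show ?thesis by (rule I_trans[OF 1 2])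
qed

definition cc :: "nat \<Rightarrow> nat \<Rightarrow> nat \<Rightarrow> nat" where "cc r M k = (r - 1) * M + k"

definition Lp :: "nat \<Rightarrow> int \<Rightarrow> (gen list \<times> gen list) list" where
  "Lp r m = (if 0 \<le> m then [(replicate (nat m) Alst, replicate (nat m) Al)]
     else (replicate (nat (-m)) Al, replicate (nat (-m)) Alst) #
       List.map (\<lambda>k. (replicate k Al @ replicate (nat (-m)) Be @ replicate (cc r (nat (-m)) k) Alst,
                    replicate (cc r (nat (-m)) k) Al @ replicate (nat (-m)) Best @ replicate k Alst)) [0..<nat (-m)])"

lemma wt_replicate[simp]: "wt r (replicate k a) = int k * gwt r a"
  by (induction k) (auto simp: algebra_simps)

lemma Lp_wt:
  assumes "r > 0" "cd \<in> set (Lp r m)"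
  shows "wt r (fst cd) = - m \<and> wt r (snd cd) = m"
proof (cases "0 \<le> m")
  case True then show ?thesis using assms by (auto simp: Lp_def)
next
  case False
  have ci: "int (cc r (nat (-m)) k) = (int r - 1) * (- m) + int k" for k
    using assms(1) False by (simp add: cc_def of_nat_diff)
  show ?thesis using False assms(2) by (auto simp: Lp_def ci algebra_simps)
qed

lemma Lp_sum:
  assumes "r > 0"
  shows "sum_list (List.map (\<lambda>cd. W (fst cd) * W (snd cd)) (Lp r m)) - 1 \<in> su0_ideal"
proof (cases "0 \<le> m")
  case True then show ?thesis using U1[of "nat m"] by (simp add: Lp_def W_mult)
next
  case False
  define M where "M = nat (-m)"
  have M1: "M \<ge> 1" using False by (simp add: M_def)
  define x where "x k = replicate k Al @ replicate M Be @ replicate (cc r M k) Alst" for k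
  define y where "y k = replicate (cc r M k) Al @ replicate M Best @ replicate k Alst" for k
  have e: "sum_list (List.map (\<lambda>cd. W (fst cd) * W (snd cd)) (Lp r m))
     = W (replicate M Al @ replicate M Alst) + (\<Sum>k<M. W (x k @ y k))"
    using False unfolding Lp_def M_def[symmetric] x_def[symmetric] y_def[symmetric]
    by (simp add: W_mult o_def sum_list_distinct_conv_sum_set atLeast0LessThan[symmetric] del: replicate_append_same)
  have "(\<Sum>k<M. W (x k @ y k)) - (\<Sum>k<M. W (replicate k Al @ [Be, Best] @ replicate k Alst)) \<in> su0_ideal"
    unfolding sum_subtractf[symmetric] x_def y_def by (intro I_sum U4 M1)
  hence "sum_list (List.map (\<lambda>cd. W (fst cd) * W (snd cd)) (Lp r m)) - 
     (W (replicate M Al @ replicate M Alst) + (\<Sum>k<M. W (replicate k Al @ [Be, Best] @ replicate k Alst))) \<in> su0_ideal"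
    unfolding e by (simp add: algebra_simps)
  from I_trans[OF this I_sym[OF U3]] show ?thesis .
qed


section \<open>Tensors\<close>

lemma lookup_tsmul: "Poly_Mapping.lookup (tsmul c t) k = c * Poly_Mapping.lookup t k"
  by (simp add: tsmul_def Poly_Mapping.map.rep_eq when_def)

lemma tsmul_add: "tsmul c (s + t) = tsmul c s + tsmul c t"
  by (rule poly_mapping_eqI) (simp add: lookup_tsmul lookup_add algebra_simps)

lemma tsmul_zero[simp]: "tsmul c 0 = 0"
  by (rule poly_mapping_eqI) (simp add: lookup_tsmul)

lemma tsmul_0[simp]: "tsmul 0 t = 0"
  by (rule poly_mapping_eqI) (simp add: lookup_tsmul)

lemma tsmul_neg1: "tsmul (-1) t = - t"
  by (rule poly_mapping_eqI) (simp add: lookup_tsmul)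

lemma tsmul_diff: "tsmul c (s - t) = tsmul c s - tsmul c t"
  by (rule poly_mapping_eqI) (simp add: lookup_tsmul lookup_minus algebra_simps)

lemma tsmul_sum: "tsmul c (\<Sum>i\<in>I. f i) = (\<Sum>i\<in>I. tsmul c (f i))"
  by (induction I rule: infinite_finite_induct) (auto simp: tsmul_add)

lemma tsmul_sum_list: "tsmul c (sum_list (List.map f xs)) = sum_list (List.map (\<lambda>i. tsmul c (f i)) xs)"
  by (induction xs) (auto simp: tsmul_add)

lemma tsmul_single: "tsmul c (Poly_Mapping.single k a) = Poly_Mapping.single k (c * a)"
  by (rule poly_mapping_eqI) (simp add: lookup_tsmul lookup_single when_def)

lemma fsmul_zero[simp]: "fsmul c 0 = 0"
  by (simp add: fsmul_eq)

lemma fsmul_0[simp]: "fsmul 0 x = 0"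
  by (simp add: fsmul_eq)

context fixes R X Y :: "falg set"
begin

abbreviation "NN \<equiv> tens_rel R X Y"

lemma N_neg: "s \<in> NN \<Longrightarrow> - s \<in> NN"
  using tens_rel.smul[of s R X Y "-1"] by (simp add: tsmul_neg1)

lemma N_diff: "s \<in> NN \<Longrightarrow> t \<in> NN \<Longrightarrow> s - t \<in> NN"
  unfolding diff_conv_add_uminus by (intro tens_rel.add N_neg)

lemma N_trans: "a - b \<in> NN \<Longrightarrow> b - c \<in> NN \<Longrightarrow> a - c \<in> NN"
  using tens_rel.add[of "a - b" R X Y "b - c"] by simp

lemma N_sym: "a - b \<in> NN \<Longrightarrow> b - a \<in> NN"
  using N_neg[of "a - b"] by simp

lemma N_sum: "(\<And>i. i \<in> A \<Longrightarrow> f i - g i \<in> NN) \<Longrightarrow> (\<Sum>i\<in>A. f i) - (\<Sum>i\<in>A. g i) \<in> NN"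
proof (induction A rule: infinite_finite_induct)
  case (insert a A)
  then show ?case using tens_rel.add[of "f a - g a" R X Y "sum f A - sum g A"] by (simp add: algebra_simps)
qed (auto intro: tens_rel.zero)

lemma N_sum_list: "(\<And>i. i \<in> set xs \<Longrightarrow> f i - g i \<in> NN) \<Longrightarrow> sum_list (List.map f xs) - sum_list (List.map g xs) \<in> NN"
proof (induction xs)
  case (Cons a xs)
  then show ?case using tens_rel.add[of "f a - g a" R X Y "sum_list (List.map f xs) - sum_list (List.map g xs)"] by (simp add: algebra_simps)
qed (auto intro: tens_rel.zero)

lemma N_mem_sum: "(\<And>i. i \<in> A \<Longrightarrow> f i \<in> NN) \<Longrightarrow> (\<Sum>i\<in>A. f i) \<in> NN"
  using N_sum[of A f "\<lambda>_. 0"] by simp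

lemma N_mem_sum_list: "(\<And>i. i \<in> set xs \<Longrightarrow> f i \<in> NN) \<Longrightarrow> sum_list (List.map f xs) \<in> NN"
  using N_sum_list[of xs f "\<lambda>_. 0"] by simp

lemma N_tsmul: "a - b \<in> NN \<Longrightarrow> tsmul c a - tsmul c b \<in> NN"
  using tens_rel.smul[of "a - b" R X Y c] by (simp add: tsmul_diff)

lemma T0l: "0 \<in> X \<Longrightarrow> y \<in> Y \<Longrightarrow> tsingle 0 y \<in> NN"
  using tens_rel.scl[where x=0 and y=y and c=0 and R=R and X=X and Y=Y] by simp

lemma T0r: "x \<in> X \<Longrightarrow> 0 \<in> Y \<Longrightarrow> tsingle x 0 \<in> NN"
  using tens_rel.scr[where x=x and y=0 and c=0 and R=R and X=X and Y=Y] by simp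

lemma T_sum_l:
  assumes "0 \<in> X" "\<And>a b. a \<in> X \<Longrightarrow> b \<in> X \<Longrightarrow> a + b \<in> X" "y \<in> Y" "\<And>i. i \<in> A \<Longrightarrow> f i \<in> X"
  shows "tsingle (\<Sum>i\<in>A. f i) y - (\<Sum>i\<in>A. tsingle (f i) y) \<in> NN"
  using assms(4)
proof (induction A rule: infinite_finite_induct)
  case (infinite A) then show ?case using T0l[OF assms(1,3)] by simp
next
  case empty then show ?case using T0l[OF assms(1,3)] by simp
next
  case (insert a A)
  have S: "(\<Sum>i\<in>A. f i) \<in> X" using insert(4) assms(1,2)
    by (induction A rule: infinite_finite_induct) auto
  have "tsingle (f a + (\<Sum>i\<in>A. f i)) y - tsingle (f a) y - tsingle (\<Sum>i\<in>A. f i) y \<in> NN"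
    using insert(4) S assms(3) by (intro tens_rel.addl) auto
  from tens_rel.add[OF this insert(3)] show ?case using insert(1,2) insert(4) by (simp add: algebra_simps)
qed

lemma T_sum_r:
  assumes "0 \<in> Y" "\<And>a b. a \<in> Y \<Longrightarrow> b \<in> Y \<Longrightarrow> a + b \<in> Y" "x \<in> X" "\<And>i. i \<in> A \<Longrightarrow> f i \<in> Y"
  shows "tsingle x (\<Sum>i\<in>A. f i) - (\<Sum>i\<in>A. tsingle x (f i)) \<in> NN"
  using assms(4)
proof (induction A rule: infinite_finite_induct)
  case (infinite A) then show ?case using T0r[OF assms(3,1)] by simp
next
  case empty then show ?case using T0r[OF assms(3,1)] by simp
next
  case (insert a A)
  have S: "(\<Sum>i\<in>A. f i) \<in> Y" using insert(4) assms(1,2)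
    by (induction A rule: infinite_finite_induct) auto
  have "tsingle x (f a + (\<Sum>i\<in>A. f i)) - tsingle x (f a) - tsingle x (\<Sum>i\<in>A. f i) \<in> NN"
    using insert(4) S assms(3) by (intro tens_rel.addr) auto
  from tens_rel.add[OF this insert(3)] show ?case using insert(1,2) insert(4) by (simp add: algebra_simps)
qed

lemma T_sum_list_r:
  assumes "0 \<in> Y" "\<And>a b. a \<in> Y \<Longrightarrow> b \<in> Y \<Longrightarrow> a + b \<in> Y" "x \<in> X" "\<And>i. i \<in> set xs \<Longrightarrow> f i \<in> Y"
  shows "tsingle x (sum_list (List.map f xs)) - sum_list (List.map (\<lambda>i. tsingle x (f i)) xs) \<in> NN"
  using assms(4)
proof (induction xs)
  case Nil then show ?case using T0r[OF assms(3,1)] by simp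
next
  case (Cons a xs)
  have S: "sum_list (List.map f xs) \<in> Y" using Cons(2) assms(1,2)
    by (induction xs) auto
  have "tsingle x (f a + sum_list (List.map f xs)) - tsingle x (f a) - tsingle x (sum_list (List.map f xs)) \<in> NN"
    using Cons(2) S assms(3) by (intro tens_rel.addr) auto
  from tens_rel.add[OF this Cons(1)] show ?case using Cons(2) by (simp add: algebra_simps)
qed

lemma T_sum_list_l:
  assumes "0 \<in> X" "\<And>a b. a \<in> X \<Longrightarrow> b \<in> X \<Longrightarrow> a + b \<in> X" "y \<in> Y" "\<And>i. i \<in> set xs \<Longrightarrow> f i \<in> X"
  shows "tsingle (sum_list (List.map f xs)) y - sum_list (List.map (\<lambda>i. tsingle (f i) y) xs) \<in> NN"
  using assms(4)
proof (induction xs)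
  case Nil then show ?case using T0l[OF assms(1,3)] by simp
next
  case (Cons a xs)
  have S: "sum_list (List.map f xs) \<in> X" using Cons(2) assms(1,2)
    by (induction xs) auto
  have "tsingle (f a + sum_list (List.map f xs)) y - tsingle (f a) y - tsingle (sum_list (List.map f xs)) y \<in> NN"
    using Cons(2) S assms(3) by (intro tens_rel.addl) auto
  from tens_rel.add[OF this Cons(1)] show ?case using Cons(2) by (simp add: algebra_simps)
qed

end


lemma Gr_mono: "Gr r S x \<Longrightarrow> S \<subseteq> T \<Longrightarrow> Gr r T x"
  by (auto simp: Gr_def)

definition Fn :: "nat \<Rightarrow> nat \<Rightarrow> falg \<Rightarrow> int set" where
  "Fn p r y = {n. \<exists>w\<in>Poly_Mapping.keys y. wt r w = int p * n}"

lemma Fn_finite: "p > 0 \<Longrightarrow> finite (Fn p r y)"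
proof -
  assume p: "p > 0"
  have "Fn p r y \<subseteq> (\<lambda>w. wt r w div int p) ` Poly_Mapping.keys y"
  proof
    fix n assume "n \<in> Fn p r y"
    then obtain w where "w \<in> Poly_Mapping.keys y" "wt r w = int p * n" by (auto simp: Fn_def)
    thus "n \<in> (\<lambda>w. wt r w div int p) ` Poly_Mapping.keys y" using p by (intro image_eqI[of _ _ w]) auto
  qed
  thus ?thesis by (rule finite_subset) simp
qed

lemma hcomp_notFn: "n \<notin> Fn p r y \<Longrightarrow> hcomp r (int p * n) y = 0"
  by (rule hcomp_notin) (auto simp: Fn_def)

lemma grp1: "(a::'a::ab_group_add) = b + c \<Longrightarrow> b = d \<Longrightarrow> a - d = c"
  by simp

lemma D1:
  assumes p: "p > 0" and y: "y \<in> Lset p r" and F: "finite F" "Fn p r y \<subseteq> F"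
  shows "y - (\<Sum>n\<in>F. hcomp r (int p * n) y) \<in> su0_ideal"
proof -
  let ?K = "wt r ` Poly_Mapping.keys y"
  let ?K1 = "{m \<in> ?K. int p dvd m}" and ?K2 = "{m \<in> ?K. \<not> int p dvd m}"
  have "y = (\<Sum>m\<in>?K. hcomp r m y)" by (rule hcomp_decomp) auto
  also have "\<dots> = (\<Sum>m\<in>?K1 \<union> ?K2. hcomp r m y)"
    by (rule sum.cong) auto
  also have "\<dots> = (\<Sum>m\<in>?K1. hcomp r m y) + (\<Sum>m\<in>?K2. hcomp r m y)"
    by (rule sum.union_disjoint) auto
  finally have ey: "y = (\<Sum>m\<in>?K1. hcomp r m y) + (\<Sum>m\<in>?K2. hcomp r m y)" .
  have K1: "?K1 = (\<lambda>n. int p * n) ` Fn p r y"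
    by (auto simp: Fn_def image_iff elim!: dvdE) (metis, force)
  have "(\<Sum>m\<in>?K1. hcomp r m y) = (\<Sum>n\<in>Fn p r y. hcomp r (int p * n) y)"
    unfolding K1 using p by (subst sum.reindex) (auto simp: inj_on_def)
  also have "\<dots> = (\<Sum>n\<in>F. hcomp r (int p * n) y)"
    using F by (intro sum.mono_neutral_left) (auto simp: hcomp_notFn)
  finally have e1: "(\<Sum>m\<in>?K1. hcomp r m y) = (\<Sum>n\<in>F. hcomp r (int p * n) y)" .
  have "(\<Sum>m\<in>?K2. hcomp r m y) \<in> su0_ideal"
    using y by (intro I_sum) (auto simp: Lset_def)
  moreover have "y - (\<Sum>n\<in>F. hcomp r (int p * n) y) = (\<Sum>m\<in>?K2. hcomp r m y)"
    by (rule grp1[OF ey e1])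
  ultimately show ?thesis by simp
qed

context
  fixes p r :: nat
  assumes p: "p > 0" and r: "r > 0"
begin

lemma A_zero: "0 \<in> Lset p r" by (simp add: Lset_Gr)
lemma A_add: "a \<in> Lset p r \<Longrightarrow> b \<in> Lset p r \<Longrightarrow> a + b \<in> Lset p r" by (simp add: Lset_Gr Gr_add)
lemma A_ideal: "a \<in> su0_ideal \<Longrightarrow> a \<in> Lset p r" by (simp add: Lset_Gr Gr_ideal)
lemma A_fsmul: "a \<in> Lset p r \<Longrightarrow> fsmul c a \<in> Lset p r" by (simp add: Lset_Gr Gr_fsmul)
lemma A_mult: "a \<in> Lset p r \<Longrightarrow> b \<in> Lset p r \<Longrightarrow> a * b \<in> Lset p r"
  unfolding Lset_Gr by (erule Gr_mult) auto
lemma A_hcomp: "hcomp r (int p * n) a \<in> Lset p r"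
  unfolding Lset_Gr by (rule Gr_hcomp) simp
lemma Ld_A: "a \<in> Ldeg p r n \<Longrightarrow> a \<in> Lset p r"
  unfolding Lset_Gr Ldeg_Gr by (erule Gr_mono) auto
lemma B_zero: "0 \<in> WPset p r" by (simp add: WPset_Gr)
lemma B_add: "a \<in> WPset p r \<Longrightarrow> b \<in> WPset p r \<Longrightarrow> a + b \<in> WPset p r" by (simp add: WPset_Gr Gr_add)
lemma B_ideal: "a \<in> su0_ideal \<Longrightarrow> a \<in> WPset p r" by (simp add: WPset_Gr Gr_ideal)
lemma B_A: "a \<in> WPset p r \<Longrightarrow> a \<in> Lset p r"
  unfolding WPset_def by (rule Ld_A)
lemma B_homog: "homog r 0 a \<Longrightarrow> a \<in> WPset p r"
  unfolding WPset_Gr by (erule Gr_homog) simp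
lemma B_mult: "a \<in> WPset p r \<Longrightarrow> b \<in> Lset p r \<Longrightarrow> a * b \<in> Lset p r"
  using A_mult B_A by blast
lemma B_mult_B: "a \<in> WPset p r \<Longrightarrow> b \<in> WPset p r \<Longrightarrow> a * b \<in> WPset p r"
  unfolding WPset_Gr by (erule Gr_mult) auto

lemma Wd_Ld: "(c, d) \<in> set (Lp r (int p * n)) \<Longrightarrow> W d \<in> Ldeg p r n"
  using Lp_wt[OF r, of "(c, d)" "int p * n"] unfolding Ldeg_Gr by (intro Gr_homog[OF homog_W']) auto

lemma Wd_A: "(c, d) \<in> set (Lp r (int p * n)) \<Longrightarrow> W d \<in> Lset p r"
  by (rule Ld_A[OF Wd_Ld])

lemma yWc_B: "(c, d) \<in> set (Lp r (int p * n)) \<Longrightarrow> hcomp r (int p * n) y * W c \<in> WPset p r"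
proof -
  assume cd: "(c, d) \<in> set (Lp r (int p * n))"
  have "homog r (int p * n + - (int p * n)) (hcomp r (int p * n) y * W c)"
    by (rule homog_mult[OF homog_hcomp homog_W']) (use Lp_wt[OF r cd] in simp)
  thus ?thesis by (intro B_homog) simp
qed

lemma hcomp_Wd: "(c, d) \<in> set (Lp r (int p * n)) \<Longrightarrow> hcomp r (int p * n') (W d) = (if n' = n then W d else 0)"
  using Lp_wt[OF r, of "(c, d)" "int p * n"] p by (auto simp: hcomp_W)

lemma D2: "a - sum_list (List.map (\<lambda>cd. a * W (fst cd) * W (snd cd)) (Lp r m)) \<in> su0_ideal"
proof -
  have "a * (sum_list (List.map (\<lambda>cd. W (fst cd) * W (snd cd)) (Lp r m)) - 1) \<in> su0_ideal"
    by (rule I_mulL[OF Lp_sum[OF r]])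
  hence "- (a * (sum_list (List.map (\<lambda>cd. W (fst cd) * W (snd cd)) (Lp r m)) - 1)) \<in> su0_ideal"
    by (rule I_neg)
  thus ?thesis by (simp add: algebra_simps sum_list_const_mult[symmetric] o_def mult.assoc)
qed

lemma A_sum: "(\<And>i. i \<in> S \<Longrightarrow> f i \<in> Lset p r) \<Longrightarrow> (\<Sum>i\<in>S. f i) \<in> Lset p r"
  unfolding Lset_Gr by (rule Gr_sum)

lemma A_sum_list: "(\<And>i. i \<in> set xs \<Longrightarrow> f i \<in> Lset p r) \<Longrightarrow> sum_list (List.map f xs) \<in> Lset p r"
  unfolding Lset_Gr by (rule Gr_sum_list)

lemma Wc_A: "(c, d) \<in> set (Lp r (int p * n)) \<Longrightarrow> W c \<in> Lset p r"
  using Lp_wt[OF r, of "(c, d)" "int p * n"] unfolding Lset_Gr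
  by (intro Gr_homog[OF homog_W']) auto

definition Ex :: "falg \<Rightarrow> falg \<Rightarrow> int \<Rightarrow> ftens" where
  "Ex x y n = sum_list (List.map (\<lambda>cd. tsingle (x * (hcomp r (int p * n) y * W (fst cd))) (W (snd cd))) (Lp r (int p * n)))"

lemma K1:
  assumes x: "x \<in> Lset p r" and y: "y \<in> Lset p r" and F: "finite F" "Fn p r y \<subseteq> F"
  shows "tsingle x y - (\<Sum>n\<in>F. Ex x y n) \<in> tens_rel (WPset p r) (Lset p r) (Lset p r)"
proof -
  let ?N = "tens_rel (WPset p r) (Lset p r) (Lset p r)"
  let ?yn = "\<lambda>n. hcomp r (int p * n) y"
  have s1: "tsingle x y - tsingle x (\<Sum>n\<in>F. ?yn n) \<in> ?N"
    by (rule tens_rel.eqr[OF x y A_sum[OF A_hcomp] D1[OF p y F]])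
  have s2: "tsingle x (\<Sum>n\<in>F. ?yn n) - (\<Sum>n\<in>F. tsingle x (?yn n)) \<in> ?N"
    by (rule T_sum_r[OF A_zero A_add x A_hcomp])
  have s3: "tsingle x (?yn n) - Ex x y n \<in> ?N" for n
  proof -
    let ?L = "Lp r (int p * n)"
    have mem: "?yn n * W (fst cd) * W (snd cd) \<in> Lset p r" if "cd \<in> set ?L" for cd
    proof -
      obtain c d where cdd: "cd = (c, d)" by (cases cd)
      have "(c, d) \<in> set ?L" using that cdd by simp
      from A_mult[OF A_mult[OF A_hcomp Wc_A[OF this]] Wd_A[OF this]] show ?thesis using cdd by simp
    qed
    have a: "tsingle x (?yn n) - tsingle x (sum_list (List.map (\<lambda>cd. ?yn n * W (fst cd) * W (snd cd)) ?L)) \<in> ?N"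
      by (rule tens_rel.eqr[OF x A_hcomp A_sum_list[OF mem] D2])
    have b: "tsingle x (sum_list (List.map (\<lambda>cd. ?yn n * W (fst cd) * W (snd cd)) ?L))
       - sum_list (List.map (\<lambda>cd. tsingle x (?yn n * W (fst cd) * W (snd cd))) ?L) \<in> ?N"
      by (rule T_sum_list_r[OF A_zero A_add x mem])
    have c: "sum_list (List.map (\<lambda>cd. tsingle x (?yn n * W (fst cd) * W (snd cd))) ?L) - Ex x y n \<in> ?N"
      unfolding Ex_def
    proof (rule N_sum_list)
      fix cd assume cd: "cd \<in> set ?L"
      obtain c d where cdd: "cd = (c, d)" by (cases cd)
      have "tsingle (fmul x (?yn n * W c)) (W d) - tsingle x (fmul (?yn n * W c) (W d)) \<in> ?N"
        using cd cdd by (intro tens_rel.bal x yWc_B Wd_A) auto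
      thus "tsingle x (?yn n * W (fst cd) * W (snd cd)) - tsingle (x * (?yn n * W (fst cd))) (W (snd cd)) \<in> ?N"
        using N_sym cdd by (simp add: fmul_eq)
    qed
    show ?thesis by (rule N_trans[OF N_trans[OF a b] c])
  qed
  have s4: "(\<Sum>n\<in>F. tsingle x (?yn n)) - (\<Sum>n\<in>F. Ex x y n) \<in> ?N"
    by (rule N_sum[OF s3])
  show ?thesis by (rule N_trans[OF N_trans[OF s1 s2] s4])
qed

lemma Wd_A': "cd \<in> set (Lp r (int p * n)) \<Longrightarrow> W (snd cd) \<in> Lset p r"
  using Wd_A[of "fst cd" "snd cd" n] by simp

lemma sum_sum_list: "(\<Sum>k\<in>K. sum_list (List.map (g k) xs)) = sum_list (List.map (\<lambda>i. \<Sum>k\<in>K. g k i) xs)"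
  by (induction xs) (auto simp: sum.distrib)

lemma t_decomp: "t = (\<Sum>k\<in>Poly_Mapping.keys t. tsmul (Poly_Mapping.lookup t k) (tsingle (fst k) (snd k)))"
  using pm_decomp[of t] by (simp add: tsingle_def tsmul_single)

lemma can_map_alt: "can_map p r t n = (\<Sum>k\<in>Poly_Mapping.keys t. fsmul (Poly_Mapping.lookup t k) (fst k * hcomp r (int p * n) (snd k)))"
  unfolding can_map_def by (simp add: case_prod_beta fmul_eq)

lemma inj_part:
  assumes t: "t \<in> Tform (Lset p r) (Lset p r)" and can: "\<forall>n. can_map p r t n \<in> su0_ideal"
  shows "t \<in> tens_rel (WPset p r) (Lset p r) (Lset p r)"
proof -
  let ?N = "tens_rel (WPset p r) (Lset p r) (Lset p r)"
  let ?K = "Poly_Mapping.keys t"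
  let ?c = "\<lambda>k. Poly_Mapping.lookup t k"
  have kA: "fst k \<in> Lset p r" "snd k \<in> Lset p r" if "k \<in> ?K" for k
    using t that by (auto simp: Tform_def)
  define F where "F = (\<Union>k\<in>?K. Fn p r (snd k))"
  have Ffin: "finite F" unfolding F_def using Fn_finite[OF p] by auto
  have FF: "Fn p r (snd k) \<subseteq> F" if "k \<in> ?K" for k using that by (auto simp: F_def)
  define z where "z k n cd = fst k * (hcomp r (int p * n) (snd k) * W (fst cd))" for k n and cd :: "gen list \<times> gen list"
  have zA: "z k n cd \<in> Lset p r" if "k \<in> ?K" "cd \<in> set (Lp r (int p * n))" for k n cd
    unfolding z_def using that
    by (intro A_mult kA A_hcomp) (auto intro: Wc_A[of "fst cd" "snd cd"])
  have s1: "t - (\<Sum>k\<in>?K. tsmul (?c k) (\<Sum>n\<in>F. Ex (fst k) (snd k) n)) \<in> ?N"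
    apply (subst t_decomp)
    apply (rule N_sum)
    apply (rule N_tsmul)
    apply (rule K1[OF kA Ffin FF]; assumption)
    done
  have e2: "tsmul (?c k) (\<Sum>n\<in>F. Ex (fst k) (snd k) n) = (\<Sum>n\<in>F. sum_list (List.map (\<lambda>cd. tsmul (?c k) (tsingle (z k n cd) (W (snd cd)))) (Lp r (int p * n))))" for k
    by (simp add: tsmul_sum tsmul_sum_list Ex_def z_def)
  have s3: "(\<Sum>k\<in>?K. tsmul (?c k) (\<Sum>n\<in>F. Ex (fst k) (snd k) n))
      - (\<Sum>k\<in>?K. \<Sum>n\<in>F. sum_list (List.map (\<lambda>cd. tsingle (fsmul (?c k) (z k n cd)) (W (snd cd))) (Lp r (int p * n)))) \<in> ?N"
    unfolding e2
    apply (rule N_sum)+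
    apply (rule N_sum_list)
    apply (rule N_sym)
    apply (rule tens_rel.scl)
     apply (rule zA; assumption)
    apply (rule Wd_A'; assumption)
    done
  have e4: "(\<Sum>k\<in>?K. \<Sum>n\<in>F. sum_list (List.map (\<lambda>cd. tsingle (fsmul (?c k) (z k n cd)) (W (snd cd))) (Lp r (int p * n))))
     = (\<Sum>n\<in>F. sum_list (List.map (\<lambda>cd. \<Sum>k\<in>?K. tsingle (fsmul (?c k) (z k n cd)) (W (snd cd))) (Lp r (int p * n))))"
    by (subst sum.swap) (simp add: sum_sum_list)
  have s5: "(\<Sum>n\<in>F. sum_list (List.map (\<lambda>cd. \<Sum>k\<in>?K. tsingle (fsmul (?c k) (z k n cd)) (W (snd cd))) (Lp r (int p * n))))
     - (\<Sum>n\<in>F. sum_list (List.map (\<lambda>cd. tsingle (\<Sum>k\<in>?K. fsmul (?c k) (z k n cd)) (W (snd cd))) (Lp r (int p * n)))) \<in> ?N"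
    apply (rule N_sum)
    apply (rule N_sum_list)
    apply (rule N_sym)
    apply (rule T_sum_l)
       apply (rule A_zero)
      apply (erule (1) A_add)
     apply (rule Wd_A'; assumption)
    apply (rule A_fsmul)
    apply (rule zA; assumption)
    done
  have e6: "(\<Sum>k\<in>?K. fsmul (?c k) (z k n cd)) = can_map p r t n * W (fst cd)" for n cd
    by (simp add: can_map_alt z_def sum_distrib_right fsmul_eq mult.assoc)
  have s7: "(\<Sum>n\<in>F. sum_list (List.map (\<lambda>cd. tsingle (\<Sum>k\<in>?K. fsmul (?c k) (z k n cd)) (W (snd cd))) (Lp r (int p * n)))) \<in> ?N"
  proof (intro N_mem_sum N_mem_sum_list)
    fix n cd assume cd: "cd \<in> set (Lp r (int p * n))"
    have I: "can_map p r t n * W (fst cd) \<in> su0_ideal" using can by (intro I_mulR) auto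
    have WA: "W (snd cd) \<in> Lset p r" using cd by (intro Wd_A[of "fst cd"]) simp
    have "tsingle (can_map p r t n * W (fst cd)) (W (snd cd)) - tsingle 0 (W (snd cd)) \<in> ?N"
      using I by (intro tens_rel.eql A_ideal A_zero WA) auto
    from tens_rel.add[OF this T0l[OF A_zero WA]]
    show "tsingle (\<Sum>k\<in>?K. fsmul (?c k) (z k n cd)) (W (snd cd)) \<in> ?N" by (simp add: e6)
  qed
  have "t - (\<Sum>n\<in>F. sum_list (List.map (\<lambda>cd. tsingle (\<Sum>k\<in>?K. fsmul (?c k) (z k n cd)) (W (snd cd))) (Lp r (int p * n)))) \<in> ?N"
    using N_trans[OF N_trans[OF s1 s3] s5[folded e4]] .
  from tens_rel.add[OF this s7] show ?thesis by simp
qed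

definition cmF :: "int \<Rightarrow> falg \<times> falg \<Rightarrow> complex \<Rightarrow> falg" where
  "cmF n k c = fsmul c (fst k * hcomp r (int p * n) (snd k))"

lemma KSok_cmF: "KSok (cmF n)"
  by (auto simp: KSok_def cmF_def fsmul_eq single_add algebra_simps)

lemma can_map_KS: "can_map p r t n = KS (cmF n) t"
  by (simp add: can_map_alt KS_def cmF_def)

lemma can_map_T: "can_map p r (tsingle x y) n = x * hcomp r (int p * n) y"
  by (simp add: can_map_KS tsingle_def KS_single KSok_cmF cmF_def fsmul_eq W_Nil[unfolded W_def])

lemma keys_sum_list: "Poly_Mapping.keys (sum_list (List.map f xs)) \<subseteq> (\<Union>i\<in>set xs. Poly_Mapping.keys (f i))"
  by (induction xs) (auto dest!: keys_add[THEN subsetD])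

lemma surj_part:
  assumes g: "\<forall>n. g n \<in> Lset p r" and fin: "finite {n. g n \<notin> su0_ideal}"
  shows "\<exists>t \<in> Tform (Lset p r) (Lset p r). \<forall>n. can_map p r t n - g n \<in> su0_ideal"
proof -
  define F where "F = {n. g n \<notin> su0_ideal}"
  define t where "t = (\<Sum>n\<in>F. sum_list (List.map (\<lambda>cd. tsingle (g n * W (fst cd)) (W (snd cd))) (Lp r (int p * n))))"
  have "Poly_Mapping.keys t \<subseteq> (\<Union>n\<in>F. Poly_Mapping.keys (sum_list (List.map (\<lambda>cd. tsingle (g n * W (fst cd)) (W (snd cd))) (Lp r (int p * n)))))"
    unfolding t_def by (rule keys_sum)
  also have "\<dots> \<subseteq> (\<Union>n\<in>F. \<Union>cd\<in>set (Lp r (int p * n)). {(g n * W (fst cd), W (snd cd))})"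
    by (intro UN_mono order_refl subset_trans[OF keys_sum_list]) (simp add: tsingle_def)
  also have "\<dots> \<subseteq> Lset p r \<times> Lset p r"
    using g by (auto intro!: A_mult dest: Wd_A Wc_A)
  finally have tT: "t \<in> Tform (Lset p r) (Lset p r)" by (simp add: Tform_def)
  have cm: "can_map p r t n' = (\<Sum>n\<in>F. if n' = n then sum_list (List.map (\<lambda>cd. g n * W (fst cd) * W (snd cd)) (Lp r (int p * n))) else 0)" for n'
  proof -
    have "can_map p r t n' = (\<Sum>n\<in>F. sum_list (List.map (\<lambda>cd. KS (cmF n') (tsingle (g n * W (fst cd)) (W (snd cd)))) (Lp r (int p * n))))"
      unfolding can_map_KS t_def by (simp add: KS_sum KS_sum_list KSok_cmF)
    also have "\<dots> = (\<Sum>n\<in>F. sum_list (List.map (\<lambda>cd. g n * W (fst cd) * hcomp r (int p * n') (W (snd cd))) (Lp r (int p * n))))"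
      by (simp only: can_map_KS[symmetric] can_map_T)
    also have "\<dots> = (\<Sum>n\<in>F. if n' = n then sum_list (List.map (\<lambda>cd. g n * W (fst cd) * W (snd cd)) (Lp r (int p * n))) else 0)"
    proof (rule sum.cong[OF refl])
      fix n
      have "\<And>cd. cd \<in> set (Lp r (int p * n)) \<Longrightarrow> hcomp r (int p * n') (W (snd cd)) = (if n' = n then W (snd cd) else 0)"
        subgoal for cd using hcomp_Wd[of "fst cd" "snd cd" n n'] by simp
        done
      then show "sum_list (List.map (\<lambda>cd. g n * W (fst cd) * hcomp r (int p * n') (W (snd cd))) (Lp r (int p * n))) =
          (if n' = n then sum_list (List.map (\<lambda>cd. g n * W (fst cd) * W (snd cd)) (Lp r (int p * n))) else 0)"
        by (cases "n' = n") (auto intro!: sum_list_0 cong: map_cong)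
    qed
    finally show ?thesis .
  qed
  have "\<forall>n. can_map p r t n - g n \<in> su0_ideal"
  proof
    fix n
    show "can_map p r t n - g n \<in> su0_ideal"
    proof (cases "n \<in> F")
      case True
      hence "can_map p r t n = sum_list (List.map (\<lambda>cd. g n * W (fst cd) * W (snd cd)) (Lp r (int p * n)))"
        unfolding cm using F_def fin by (simp add: sum.delta)
      thus ?thesis using I_sym[OF D2] by simp
    next
      case False
      hence "can_map p r t n = 0" unfolding cm by (auto intro: sum.neutral)
      thus ?thesis using False I_neg by (simp add: F_def)
    qed
  qed
  thus ?thesis using tT by blast
qed

section \<open>The splitting\<close>

abbreviation "N0 \<equiv> tens_rel {} (WPset p r) (Lset p r)"

definition SPg :: "(int \<Rightarrow> gen list \<times> gen list \<Rightarrow> ftens) \<Rightarrow> int set \<Rightarrow> ftens" where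
  "SPg X F = (\<Sum>n\<in>F. sum_list (List.map (X n) (Lp r (int p * n))))"

definition SP :: "(int \<Rightarrow> falg) \<Rightarrow> int set \<Rightarrow> ftens" where
  "SP h F = SPg (\<lambda>n cd. tsingle (h n * W (fst cd)) (W (snd cd))) F"

definition sp :: "falg \<Rightarrow> ftens" where
  "sp a = SP (\<lambda>n. hcomp r (int p * n) a) (Fn p r a)"

lemma SPg_cong2: "(\<And>n cd. n \<in> F \<Longrightarrow> cd \<in> set (Lp r (int p * n)) \<Longrightarrow> X n cd - Y n cd \<in> N0) \<Longrightarrow> SPg X F - SPg Y F \<in> N0"
  unfolding SPg_def by (intro N_sum N_sum_list) auto

lemma SPg_cong3: "(\<And>n cd. n \<in> F \<Longrightarrow> cd \<in> set (Lp r (int p * n)) \<Longrightarrow> X n cd - Y n cd - Z n cd \<in> N0) \<Longrightarrow> SPg X F - SPg Y F - SPg Z F \<in> N0"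
  unfolding SPg_def sum_subtractf[symmetric] sum_list_subtractf[symmetric]
  by (intro N_mem_sum N_mem_sum_list) (auto simp: o_def)

lemma SP_ext:
  assumes "finite F" "G \<subseteq> F" "\<And>n. n \<in> F - G \<Longrightarrow> h n = 0"
  shows "SP h G - SP h F \<in> N0"
proof -
  have "SP h F = SP h G + SP h (F - G)"
    unfolding SP_def SPg_def using assms(1,2) by (subst sum.subset_diff[of G F]) auto
  moreover have "SP h (F - G) \<in> N0"
    unfolding SP_def SPg_def
  proof (intro N_mem_sum N_mem_sum_list)
    fix n cd assume "n \<in> F - G" "cd \<in> set (Lp r (int p * n))"
    thus "tsingle (h n * W (fst cd)) (W (snd cd)) \<in> N0"
      using assms(3) by (simp add: T0l B_zero Wd_A')
  qed
  ultimately show ?thesis using N_neg by simp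
qed

lemma sp_ext: "finite F \<Longrightarrow> Fn p r a \<subseteq> F \<Longrightarrow> sp a - SP (\<lambda>n. hcomp r (int p * n) a) F \<in> N0"
  unfolding sp_def by (rule SP_ext) (auto simp: hcomp_notFn)

lemma N_combine: "a - a' \<in> NN R X Y \<Longrightarrow> b - b' \<in> NN R X Y \<Longrightarrow> a' - b' \<in> NN R X Y \<Longrightarrow> a - b \<in> NN R X Y"
  using N_trans[OF N_trans[of a a' R X Y b'] N_sym[of b b']] by blast

lemma N_combine3: "a - a' \<in> NN R X Y \<Longrightarrow> b - b' \<in> NN R X Y \<Longrightarrow> c - c' \<in> NN R X Y \<Longrightarrow> a' - b' - c' \<in> NN R X Y \<Longrightarrow> a - b - c \<in> NN R X Y"
proof -
  assume h: "a - a' \<in> NN R X Y" "b - b' \<in> NN R X Y" "c - c' \<in> NN R X Y" "a' - b' - c' \<in> NN R X Y"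
  have "(a - a') - (b - b') - (c - c') + (a' - b' - c') \<in> NN R X Y"
    by (intro tens_rel.add N_diff h)
  thus ?thesis by (simp add: algebra_simps)
qed

lemma sp_Tform: "sp a \<in> Tform (WPset p r) (Lset p r)"
proof -
  have "Poly_Mapping.keys (sp a) \<subseteq> (\<Union>n\<in>Fn p r a. Poly_Mapping.keys (sum_list (List.map (\<lambda>cd. tsingle (hcomp r (int p * n) a * W (fst cd)) (W (snd cd))) (Lp r (int p * n)))))"
    unfolding sp_def SP_def SPg_def by (rule keys_sum)
  also have "\<dots> \<subseteq> (\<Union>n\<in>Fn p r a. \<Union>cd\<in>set (Lp r (int p * n)). {(hcomp r (int p * n) a * W (fst cd), W (snd cd))})"
    by (intro UN_mono order_refl subset_trans[OF keys_sum_list]) (simp add: tsingle_def)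
  also have "\<dots> \<subseteq> WPset p r \<times> Lset p r"
    by (auto dest: Wd_A yWc_B)
  finally show ?thesis by (simp add: Tform_def)
qed

lemma sp_cong:
  assumes "a - a' \<in> su0_ideal"
  shows "sp a - sp a' \<in> N0"
proof -
  define F where "F = Fn p r a \<union> Fn p r a'"
  have F: "finite F" by (simp add: F_def Fn_finite[OF p])
  show ?thesis
  proof (rule N_combine[OF sp_ext[OF F] sp_ext[OF F]])
    show "SP (\<lambda>n. hcomp r (int p * n) a) F - SP (\<lambda>n. hcomp r (int p * n) a') F \<in> N0"
      unfolding SP_def
    proof (rule SPg_cong2)
      fix n cd assume cd: "cd \<in> set (Lp r (int p * n))"
      obtain c d where cdd: "cd = (c, d)" by (cases cd)
      have "hcomp r (int p * n) a * W c - hcomp r (int p * n) a' * W c \<in> su0_ideal"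
        using I_mulR[OF hcomp_ideal[OF assms], of r "int p * n" "W c"] by (simp add: hcomp_diff algebra_simps)
      thus "tsingle (hcomp r (int p * n) a * W (fst cd)) (W (snd cd)) - tsingle (hcomp r (int p * n) a' * W (fst cd)) (W (snd cd)) \<in> N0"
        using cd cdd by (auto intro!: tens_rel.eql yWc_B Wd_A)
    qed
  qed (auto simp: F_def)
qed

lemma sp_add: "sp (a + a') - sp a - sp a' \<in> N0"
proof -
  define F where "F = Fn p r (a + a') \<union> Fn p r a \<union> Fn p r a'"
  have F: "finite F" by (simp add: F_def Fn_finite[OF p])
  show ?thesis
  proof (rule N_combine3[OF sp_ext[OF F] sp_ext[OF F] sp_ext[OF F]])
    show "SP (\<lambda>n. hcomp r (int p * n) (a + a')) F - SP (\<lambda>n. hcomp r (int p * n) a) F - SP (\<lambda>n. hcomp r (int p * n) a') F \<in> N0"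
      unfolding SP_def
    proof (rule SPg_cong3)
      fix n cd assume cd: "cd \<in> set (Lp r (int p * n))"
      obtain c d where cdd: "cd = (c, d)" by (cases cd)
      show "tsingle (hcomp r (int p * n) (a + a') * W (fst cd)) (W (snd cd)) - tsingle (hcomp r (int p * n) a * W (fst cd)) (W (snd cd))
          - tsingle (hcomp r (int p * n) a' * W (fst cd)) (W (snd cd)) \<in> N0"
        using cd cdd tens_rel.addl[of "hcomp r (int p * n) a * W c" "WPset p r" "hcomp r (int p * n) a' * W c" "W d" "Lset p r" "{}"]
        by (auto simp: hcomp_add distrib_right intro: yWc_B Wd_A)
    qed
  qed (auto simp: F_def)
qed

lemma SP_tsmul: "tsmul c (SP h F) = SPg (\<lambda>n cd. tsmul c (tsingle (h n * W (fst cd)) (W (snd cd)))) F"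
  by (simp add: SP_def SPg_def tsmul_sum tsmul_sum_list)

lemma sp_smul: "sp (fsmul c a) - tsmul c (sp a) \<in> N0"
proof -
  define F where "F = Fn p r a \<union> Fn p r (fsmul c a)"
  have F: "finite F" by (simp add: F_def Fn_finite[OF p])
  have 1: "sp (fsmul c a) - SP (\<lambda>n. hcomp r (int p * n) (fsmul c a)) F \<in> N0"
    by (rule sp_ext[OF F]) (auto simp: F_def)
  have 2: "tsmul c (sp a) - tsmul c (SP (\<lambda>n. hcomp r (int p * n) a) F) \<in> N0"
    by (rule N_tsmul, rule sp_ext[OF F]) (auto simp: F_def)
  have 3: "SP (\<lambda>n. hcomp r (int p * n) (fsmul c a)) F - tsmul c (SP (\<lambda>n. hcomp r (int p * n) a) F) \<in> N0"
    unfolding SP_tsmul unfolding SP_def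
  proof (rule SPg_cong2)
    fix n cd assume cd: "cd \<in> set (Lp r (int p * n))"
    obtain c' d where cdd: "cd = (c', d)" by (cases cd)
    have e: "hcomp r (int p * n) (fsmul c a) * W c' = fsmul c (hcomp r (int p * n) a * W c')"
      by (simp add: hcomp_fsmul) (simp add: fsmul_eq mult.assoc)
    show "tsingle (hcomp r (int p * n) (fsmul c a) * W (fst cd)) (W (snd cd)) - tsmul c (tsingle (hcomp r (int p * n) a * W (fst cd)) (W (snd cd))) \<in> N0"
      using cd cdd unfolding e by (auto intro!: tens_rel.scl yWc_B Wd_A simp: e)
  qed
  show ?thesis by (rule N_combine[OF 1 2 3])
qed

definition tlF :: "falg \<Rightarrow> falg \<times> falg \<Rightarrow> complex \<Rightarrow> ftens" where
  "tlF b k c = Poly_Mapping.single (b * fst k, snd k) c"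

lemma tlmul_KS: "tlmul b t = KS (tlF b) t"
  by (simp add: tlmul_def KS_def tlF_def case_prod_beta fmul_eq)

lemma KSok_tlF: "KSok (tlF b)"
  by (auto simp: KSok_def tlF_def single_add)

lemma tlmul_T: "tlmul b (tsingle x y) = tsingle (b * x) y"
  by (simp add: tlmul_KS tsingle_def KS_single KSok_tlF tlF_def)

lemma sp_lmul:
  assumes b: "b \<in> WPset p r"
  shows "sp (b * a) - tlmul b (sp a) \<in> N0"
proof -
  define F where "F = Fn p r a \<union> Fn p r (b * a)"
  have F: "finite F" by (simp add: F_def Fn_finite[OF p])
  have "tlmul b (sp a) = (\<Sum>n\<in>Fn p r a. sum_list (List.map (\<lambda>cd. KS (tlF b) (tsingle (hcomp r (int p * n) a * W (fst cd)) (W (snd cd)))) (Lp r (int p * n))))"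
    unfolding sp_def SP_def SPg_def tlmul_KS by (simp add: KS_sum KS_sum_list KSok_tlF)
  also have "\<dots> = SP (\<lambda>n. b * hcomp r (int p * n) a) (Fn p r a)"
    unfolding SP_def SPg_def by (simp only: tlmul_KS[symmetric] tlmul_T mult.assoc)
  finally have e: "tlmul b (sp a) = SP (\<lambda>n. b * hcomp r (int p * n) a) (Fn p r a)" .
  have 1: "sp (b * a) - SP (\<lambda>n. hcomp r (int p * n) (b * a)) F \<in> N0"
    by (rule sp_ext[OF F]) (auto simp: F_def)
  have 2: "tlmul b (sp a) - SP (\<lambda>n. b * hcomp r (int p * n) a) F \<in> N0"
    unfolding e by (rule SP_ext[OF F]) (auto simp: F_def hcomp_notFn)
  have 3: "SP (\<lambda>n. hcomp r (int p * n) (b * a)) F - SP (\<lambda>n. b * hcomp r (int p * n) a) F \<in> N0"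
    unfolding SP_def
  proof (rule SPg_cong2)
    fix n cd assume cd: "cd \<in> set (Lp r (int p * n))"
    obtain c d where cdd: "cd = (c, d)" by (cases cd)
    have I: "hcomp r (int p * n) (b * a) * W c - b * hcomp r (int p * n) a * W c \<in> su0_ideal"
      using I_mulR[OF Gr0_hcomp_mult[OF b[unfolded WPset_Gr]], of "int p * n" a "W c"] by (simp add: algebra_simps)
    have B1: "b * hcomp r (int p * n) a * W c \<in> WPset p r"
      using B_mult_B[OF b yWc_B] cd cdd by (simp add: mult.assoc)
    show "tsingle (hcomp r (int p * n) (b * a) * W (fst cd)) (W (snd cd)) - tsingle (b * hcomp r (int p * n) a * W (fst cd)) (W (snd cd)) \<in> N0"
      using cd cdd I B1 by (auto intro!: tens_rel.eql yWc_B Wd_A)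
  qed
  show ?thesis by (rule N_combine[OF 1 2 3])
qed

lemma sp_deg:
  assumes a: "a \<in> Ldeg p r n"
  shows "\<exists>t \<in> Tform (WPset p r) (Ldeg p r n). sp a - t \<in> N0"
proof -
  define t where "t = sum_list (List.map (\<lambda>cd. tsingle (hcomp r (int p * n) a * W (fst cd)) (W (snd cd))) (Lp r (int p * n)))"
  define F where "F = insert n (Fn p r a)"
  have F: "finite F" by (simp add: F_def Fn_finite[OF p])
  have 1: "sp a - SP (\<lambda>n. hcomp r (int p * n) a) F \<in> N0"
    by (rule sp_ext[OF F]) (auto simp: F_def)
  have e: "SP (\<lambda>n. hcomp r (int p * n) a) F = t + SP (\<lambda>n. hcomp r (int p * n) a) (F - {n})"
    unfolding SP_def SPg_def t_def using F by (subst sum.remove[of F n]) (auto simp: F_def)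
  have 2: "SP (\<lambda>n. hcomp r (int p * n) a) (F - {n}) \<in> N0"
    unfolding SP_def SPg_def
  proof (intro N_mem_sum N_mem_sum_list)
    fix n' cd assume n': "n' \<in> F - {n}" and cd: "cd \<in> set (Lp r (int p * n'))"
    have "hcomp r (int p * n') a \<in> su0_ideal" using a n' p by (auto simp: Ldeg_def)
    hence I: "hcomp r (int p * n') a * W (fst cd) - 0 \<in> su0_ideal" by (simp add: I_mulR)
    have WA: "W (snd cd) \<in> Lset p r" by (rule Wd_A'[OF cd])
    have B1: "hcomp r (int p * n') a * W (fst cd) \<in> WPset p r" using cd yWc_B[of "fst cd" "snd cd"] by simp
    have "tsingle (hcomp r (int p * n') a * W (fst cd)) (W (snd cd)) - tsingle 0 (W (snd cd)) \<in> N0"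
      by (rule tens_rel.eql[OF B1 B_zero WA I])
    from tens_rel.add[OF this T0l[OF B_zero WA]]
    show "tsingle (hcomp r (int p * n') a * W (fst cd)) (W (snd cd)) \<in> N0" by simp
  qed
  have "sp a - t \<in> N0"
    using tens_rel.add[OF 1 2] unfolding e by (simp add: algebra_simps)
  moreover have "t \<in> Tform (WPset p r) (Ldeg p r n)"
  proof -
    have "Poly_Mapping.keys t \<subseteq> (\<Union>cd\<in>set (Lp r (int p * n)). {(hcomp r (int p * n) a * W (fst cd), W (snd cd))})"
      unfolding t_def by (intro subset_trans[OF keys_sum_list] UN_mono order_refl) (simp add: tsingle_def)
    also have "\<dots> \<subseteq> WPset p r \<times> Ldeg p r n"
      by (auto dest: Wd_Ld yWc_B)
    finally show ?thesis by (simp add: Tform_def)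
  qed
  ultimately show ?thesis by blast
qed

definition tmF :: "falg \<times> falg \<Rightarrow> complex \<Rightarrow> falg" where
  "tmF k c = fsmul c (fst k * snd k)"

lemma tmult_KS: "tmult t = KS tmF t"
  by (simp add: tmult_def KS_def tmF_def case_prod_beta fmul_eq)

lemma KSok_tmF: "KSok tmF"
  by (auto simp: KSok_def tmF_def fsmul_eq single_add algebra_simps)

lemma tmult_T: "tmult (tsingle x y) = x * y"
  by (simp add: tmult_KS tsingle_def KS_single KSok_tmF tmF_def fsmul_eq W_Nil[unfolded W_def])

lemma sp_tmult:
  assumes a: "a \<in> Lset p r"
  shows "tmult (sp a) - a \<in> su0_ideal"
proof -
  let ?h = "\<lambda>n. hcomp r (int p * n) a"
  have "tmult (sp a) = (\<Sum>n\<in>Fn p r a. sum_list (List.map (\<lambda>cd. KS tmF (tsingle (?h n * W (fst cd)) (W (snd cd)))) (Lp r (int p * n))))"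
    unfolding sp_def SP_def SPg_def tmult_KS by (simp add: KS_sum KS_sum_list KSok_tmF)
  also have "\<dots> = (\<Sum>n\<in>Fn p r a. sum_list (List.map (\<lambda>cd. ?h n * W (fst cd) * W (snd cd)) (Lp r (int p * n))))"
    by (simp only: tmult_KS[symmetric] tmult_T)
  finally have e: "tmult (sp a) = (\<Sum>n\<in>Fn p r a. sum_list (List.map (\<lambda>cd. ?h n * W (fst cd) * W (snd cd)) (Lp r (int p * n))))" .
  have 1: "(\<Sum>n\<in>Fn p r a. ?h n) - tmult (sp a) \<in> su0_ideal"
    unfolding e sum_subtractf[symmetric] by (intro I_sum D2)
  have 2: "a - (\<Sum>n\<in>Fn p r a. ?h n) \<in> su0_ideal"
    by (rule D1[OF p a Fn_finite[OF p] order_refl])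
  show ?thesis using I_sym[OF I_trans[OF 2 1]] .
qed

end


theorem theorem5p3:
  fixes p r :: nat
  assumes "0 < p" and "0 < r" and "coprime p r"
  shows "quantum_principal_fibration p r"
proof -
  have p: "0 < p" and r: "0 < r" by fact+
  have cb: "can_bijective p r"
    unfolding can_bijective_def
    using inj_part[OF p r] surj_part[OF p r] by blast
  have "has_equivariant_splitting p r"
    unfolding has_equivariant_splitting_def Let_def
  proof (rule exI[of _ "sp p r"], intro conjI ballI allI impI)
    fix a assume "a \<in> Lset p r"
    show "sp p r a \<in> Tform (WPset p r) (Lset p r)" by (rule sp_Tform[OF p r])
  next
    fix a a' assume "a \<in> Lset p r" "a' \<in> Lset p r" and h: "a - a' \<in> su0_ideal"
    from h show "sp p r a - sp p r a' \<in> tens_rel {} (WPset p r) (Lset p r)" by (rule sp_cong[OF p r])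
  next
    fix a a' show "sp p r (a + a') - sp p r a - sp p r a' \<in> tens_rel {} (WPset p r) (Lset p r)"
      by (rule sp_add[OF p r])
  next
    fix a c show "sp p r (fsmul c a) - tsmul c (sp p r a) \<in> tens_rel {} (WPset p r) (Lset p r)"
      by (rule sp_smul[OF p r])
  next
    fix b a assume "b \<in> WPset p r"
    thus "sp p r (fmul b a) - tlmul b (sp p r a) \<in> tens_rel {} (WPset p r) (Lset p r)"
      unfolding fmul_eq by (rule sp_lmul[OF p r])
  next
    fix n a assume "a \<in> Ldeg p r n"
    thus "\<exists>t\<in>Tform (WPset p r) (Ldeg p r n). sp p r a - t \<in> tens_rel {} (WPset p r) (Lset p r)"
      by (rule sp_deg[OF p r])
  next
    fix a assume "a \<in> Lset p r"
    thus "tmult (sp p r a) - a \<in> su0_ideal" by (rule sp_tmult[OF p r])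
  qed
  thus ?thesis using cb by (simp add: quantum_principal_fibration_def)
qed

end
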